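(* Let $\multimap_{\mathtt m}$, $\multimap_{\mathtt e}$ and $\equiv$ be the reduction relations and the structural equivalence of any one of the four calculi ${\tt Name}$, ${\tt Value}^{\tt LR}$, ${\tt Value}^{\tt RL}$, ${\tt Need}$ described below, and let $\mathtt x\in\{\mathtt m,\mathtt e\}$. If $t\equiv u$ and $t\multimap_{\mathtt x} t'$, then there exists $u'$ such that $u\multimap_{\mathtt x} u'$ and $t'\equiv u'$.
   Context: Terms: $t,u,w ::= x \mid v \mid t\,u \mid t[x\leftarrow u]$, values $v ::= \lambda x.t$; $\lambda x.t$ and $t[x\leftarrow u]$ bind $x$ in $t$; terms are up to $\alpha$-equivalence, rewriting is capture-avoiding. Contexts are terms with one hole $\langle\cdot\rangle$. Weak contexts: $W ::= \langle\cdot\rangle \mid W\,u \mid t\,W \mid W[x\leftarrow u] \mid t[x\leftarrow W]$. Substitution contexts: $L ::= \langle\cdot\rangle \mid L[x\leftarrow t]$. Root rules (for a family of contexts $C$, with $C$ not capturing $x$): dB: $L\langle\lambda x.t\rangle u \mapsto L\langle t[x\leftarrow u]\rangle$; dBv: $L\langle\lambda x.t\rangle L'\langle v\rangle \mapsto L\langle t[x\leftarrow L'\langle v\rangle]\rangle$; ls w.r.t. $C$: $C\langle x\rangle[x\leftarrow u]\mapsto C\langle u\rangle[x\leftarrow u]$; lsv w.r.t. $C$: $C\langle x\rangle[x\leftarrow L\langle v\rangle]\mapsto L\langle C\langle v\rangle[x\leftarrow v]\rangle$. Calculi (evaluation contexts; $\mapsto_{\mathtt m}$; $\mapsto_{\mathtt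 e}$): ${\tt Name}$: $H ::= \langle\cdot\rangle \mid H\,t \mid H[x\leftarrow t]$; dB; ls w.r.t. $H$. ${\tt Value}^{\tt LR}$: $V ::= \langle\cdot\rangle \mid V\,t \mid L\langle v\rangle V \mid V[x\leftarrow t]$; dBv; lsv w.r.t. $V$. ${\tt Value}^{\tt RL}$: $S ::= \langle\cdot\rangle \mid S\,L\langle v\rangle \mid t\,S \mid S[x\leftarrow t]$; dBv; lsv w.r.t. $S$. ${\tt Need}$: $N ::= \langle\cdot\rangle \mid N\,t \mid N[x\leftarrow t] \mid N'\langle x\rangle[x\leftarrow N]$; dB; lsv w.r.t. $N$. Then $\multimap_{\mathtt m}:=E\langle\mapsto_{\mathtt m}\rangle$, $\multimap_{\mathtt e}:=E\langle\mapsto_{\mathtt e}\rangle$ for $E$ ranging over the evaluation contexts. Structural axioms: (gc) $t[x\leftarrow u]\equiv t$ if $x\notin\mathrm{fv}(t)$; (dup) $t[x\leftarrow u]\equiv t_{[y]_x}[x\leftarrow u][y\leftarrow u]$ where $t_{[y]_x}$ is obtained from $t$ by renaming some (possibly none) occurrences of $x$ as $y$; (@) $(t\,w)[x\leftarrow u]\equiv t[x\leftarrow u]\,w[x\leftarrow u]$; (com) $t[x\leftarrow u][y\leftarrow w]\equiv t[y\leftarrow w][x\leftarrow u]$ if $y\notin\mathrm{fv}(u)$ and $x\notin\mathrm{fv}(w)$; ([$\cdot$]) $t[x\leftarrow u][y\leftarrow w]\equiv t[x\leftarrow u[y\leftarrow w]]$ if $y\notin\mathrm{fv}(t)$; (@l)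 $(t\,w)[x\leftarrow u]\equiv t[x\leftarrow u]\,w$ if $x\notin\mathrm{fv}(w)$. For ${\tt Name}$, ${\tt Value}^{\tt LR}$, ${\tt Value}^{\tt RL}$, $\equiv$ is the smallest equivalence relation containing the closure under weak contexts of $\alpha$-equivalence, gc, dup, @, com and [$\cdot$]. For ${\tt Need}$, $\equiv$ is the equivalence generated by @l, com and [$\cdot$] (closed under weak contexts). *)

theory Defs
  imports Main
begin

text \<open>Terms up to alpha-equivalence are represented with de Bruijn indices.
  Var i: variable; Lam t: abstraction (body t, bound variable = index 0);
  App t u: application; ES t u: explicit substitution t[x<-u], where x is
  index 0 in t (ES binds in its first argument only).\<close>

datatype trm = Var nat | Lam trm | App trm trm | ES trm trm

fun lift :: "nat \<Rightarrow> nat \<Rightarrow> trm \<Rightarrow> trm" where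
  "lift c k (Var i) = (if i < c then Var i else Var (i + k))"
| "lift c k (Lam t) = Lam (lift (Suc c) k t)"
| "lift c k (App t u) = App (lift c k t) (lift c k u)"
| "lift c k (ES t u) = ES (lift (Suc c) k t) (lift c k u)"

fun swap :: "nat \<Rightarrow> trm \<Rightarrow> trm" where
  "swap c (Var i) = (if i = c then Var (Suc c) else if i = Suc c then Var c else Var i)"
| "swap c (Lam t) = Lam (swap (Suc c) t)"
| "swap c (App t u) = App (swap c t) (swap c u)"
| "swap c (ES t u) = ES (swap (Suc c) t) (swap c u)"

text \<open>ren_some c t t': t' is t in which a new binder y is inserted just above
  the binder x (index c), and some (possibly none) occurrences of x are renamed
  to y: in t', index c is x and index c+1 is y.\<close>
inductive ren_some :: "nat \<Rightarrow> trm \<Rightarrow> trm \<Rightarrow> bool" where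
  rs_lt: "i < c \<Longrightarrow> ren_some c (Var i) (Var i)"
| rs_keep: "ren_some c (Var c) (Var c)"
| rs_ren: "ren_some c (Var c) (Var (Suc c))"
| rs_gt: "c < i \<Longrightarrow> ren_some c (Var i) (Var (Suc i))"
| rs_lam: "ren_some (Suc c) t t' \<Longrightarrow> ren_some c (Lam t) (Lam t')"
| rs_app: "ren_some c t t' \<Longrightarrow> ren_some c u u' \<Longrightarrow> ren_some c (App t u) (App t' u')"
| rs_es: "ren_some (Suc c) t t' \<Longrightarrow> ren_some c u u' \<Longrightarrow> ren_some c (ES t u) (ES t' u')"

text \<open>Weak contexts (the only contexts used: no hole under a lambda).\<close>
datatype ctx = Hole | CAppL ctx trm | CAppR trm ctx | CESL ctx trm | CESR trm ctx

fun plug :: "ctx \<Rightarrow> trm \<Rightarrow> trm" where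
  "plug Hole s = s"
| "plug (CAppL C t) s = App (plug C s) t"
| "plug (CAppR t C) s = App t (plug C s)"
| "plug (CESL C t) s = ES (plug C s) t"
| "plug (CESR t C) s = ES t (plug C s)"

fun depth :: "ctx \<Rightarrow> nat" where
  "depth Hole = 0"
| "depth (CAppL C t) = depth C"
| "depth (CAppR t C) = depth C"
| "depth (CESL C t) = Suc (depth C)"
| "depth (CESR t C) = depth C"

fun cshift :: "nat \<Rightarrow> nat \<Rightarrow> ctx \<Rightarrow> ctx" where
  "cshift c k Hole = Hole"
| "cshift c k (CAppL C t) = CAppL (cshift c k C) (lift c k t)"
| "cshift c k (CAppR t C) = CAppR (lift c k t) (cshift c k C)"
| "cshift c k (CESL C t) = CESL (cshift (Suc c) k C) (lift c k t)"
| "cshift c k (CESR t C) = CESR (lift (Suc c) k t) (cshift c k C)"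

inductive is_L :: "ctx \<Rightarrow> bool" where
  "is_L Hole"
| "is_L L \<Longrightarrow> is_L (CESL L t)"

inductive is_H :: "ctx \<Rightarrow> bool" where
  "is_H Hole"
| "is_H H \<Longrightarrow> is_H (CAppL H t)"
| "is_H H \<Longrightarrow> is_H (CESL H t)"

inductive is_V :: "ctx \<Rightarrow> bool" where
  "is_V Hole"
| "is_V V \<Longrightarrow> is_V (CAppL V t)"
| "is_L L \<Longrightarrow> is_V V \<Longrightarrow> is_V (CAppR (plug L (Lam t)) V)"
| "is_V V \<Longrightarrow> is_V (CESL V t)"

inductive is_S :: "ctx \<Rightarrow> bool" where
  "is_S Hole"
| "is_L L \<Longrightarrow> is_S S \<Longrightarrow> is_S (CAppL S (plug L (Lam t)))"
| "is_S S \<Longrightarrow> is_S (CAppR t S)"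
| "is_S S \<Longrightarrow> is_S (CESL S t)"

inductive is_N :: "ctx \<Rightarrow> bool" where
  "is_N Hole"
| "is_N N \<Longrightarrow> is_N (CAppL N t)"
| "is_N N \<Longrightarrow> is_N (CESL N t)"
| "is_N N' \<Longrightarrow> is_N N \<Longrightarrow> is_N (CESR (plug N' (Var (depth N'))) N)"

text \<open>Root rules. In "plug C (Var (depth C))" the hole variable is the one bound
  by the enclosing ES, i.e. C does not capture it.\<close>
inductive dB_root :: "trm \<Rightarrow> trm \<Rightarrow> bool" where
  "is_L L \<Longrightarrow> dB_root (App (plug L (Lam t)) u) (plug L (ES t (lift 0 (depth L) u)))"

inductive dBv_root :: "trm \<Rightarrow> trm \<Rightarrow> bool" where
  "is_L L \<Longrightarrow> is_L L' \<Longrightarrow>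
    dBv_root (App (plug L (Lam t)) (plug L' (Lam s)))
             (plug L (ES t (lift 0 (depth L) (plug L' (Lam s)))))"

inductive ls_root :: "(ctx \<Rightarrow> bool) \<Rightarrow> trm \<Rightarrow> trm \<Rightarrow> bool" for P where
  "P C \<Longrightarrow> ls_root P (ES (plug C (Var (depth C))) u)
                      (ES (plug C (lift 0 (Suc (depth C)) u)) u)"

inductive lsv_root :: "(ctx \<Rightarrow> bool) \<Rightarrow> trm \<Rightarrow> trm \<Rightarrow> bool" for P where
  "P C \<Longrightarrow> is_L L \<Longrightarrow>
    lsv_root P (ES (plug C (Var (depth C))) (plug L (Lam s)))
      (plug L (ES (plug (cshift 1 (depth L) C) (lift 0 (Suc (depth C)) (Lam s))) (Lam s)))"

datatype calculus = Name | ValueLR | ValueRL | Need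
datatype kind = M | E

fun evctx :: "calculus \<Rightarrow> ctx \<Rightarrow> bool" where
  "evctx Name = is_H"
| "evctx ValueLR = is_V"
| "evctx ValueRL = is_S"
| "evctx Need = is_N"

fun root :: "calculus \<Rightarrow> kind \<Rightarrow> trm \<Rightarrow> trm \<Rightarrow> bool" where
  "root Name M = dB_root"
| "root ValueLR M = dBv_root"
| "root ValueRL M = dBv_root"
| "root Need M = dB_root"
| "root Name E = ls_root is_H"
| "root ValueLR E = lsv_root is_V"
| "root ValueRL E = lsv_root is_S"
| "root Need E = lsv_root is_N"

definition red :: "calculus \<Rightarrow> kind \<Rightarrow> trm \<Rightarrow> trm \<Rightarrow> bool" where
  "red c x t t' \<longleftrightarrow> (\<exists>Ev s s'. evctx c Ev \<and> root c x s s' \<and> t = plug Ev s \<and> t' = plug Ev s')"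

text \<open>Structural axioms (alpha-equivalence is syntactic identity here).\<close>
inductive str_ax :: "trm \<Rightarrow> trm \<Rightarrow> bool" where
  ax_gc: "str_ax (ES (lift 0 1 t) u) t"
| ax_dup: "ren_some 0 t t' \<Longrightarrow> str_ax (ES t u) (ES (ES t' (lift 0 1 u)) u)"
| ax_app: "str_ax (ES (App t w) u) (App (ES t u) (ES w u))"
| ax_com: "str_ax (ES (ES t (lift 0 1 u)) w) (ES (ES (swap 0 t) (lift 0 1 w)) u)"
| ax_sub: "str_ax (ES (ES (lift 1 1 t) u) w) (ES t (ES u w))"

inductive need_ax :: "trm \<Rightarrow> trm \<Rightarrow> bool" where
  ax_appl: "need_ax (ES (App t (lift 0 1 w)) u) (App (ES t u) w)"
| ax_com: "need_ax (ES (ES t (lift 0 1 u)) w) (ES (ES (swap 0 t) (lift 0 1 w)) u)"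
| ax_sub: "need_ax (ES (ES (lift 1 1 t) u) w) (ES t (ES u w))"

fun axioms :: "calculus \<Rightarrow> trm \<Rightarrow> trm \<Rightarrow> bool" where
  "axioms Need = need_ax"
| "axioms Name = str_ax"
| "axioms ValueLR = str_ax"
| "axioms ValueRL = str_ax"

definition wclose :: "(trm \<Rightarrow> trm \<Rightarrow> bool) \<Rightarrow> trm \<Rightarrow> trm \<Rightarrow> bool" where
  "wclose R t u \<longleftrightarrow> (\<exists>W s s'. R s s' \<and> t = plug W s \<and> u = plug W s')"

definition streq :: "calculus \<Rightarrow> trm \<Rightarrow> trm \<Rightarrow> bool" where
  "streq c = equivclp (wclose (axioms c))"

end

theory Submission
  imports Defs
begin


lemma lift_0[simp]: "lift c 0 t = t"
  by (induction t arbitrary: c) auto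

lemma lift_lift: "n \<le> m \<Longrightarrow> m \<le> n + k \<Longrightarrow> lift m l (lift n k t) = lift n (k + l) t"
  by (induction t arbitrary: n m) auto

lemma lift_lift_comm: "n \<le> m \<Longrightarrow> lift (m + k) l (lift n k t) = lift n k (lift m l t)"
proof (induction t arbitrary: n m)
  case (Lam t) thus ?case using Lam.IH[of "Suc n" "Suc m"] by simp
next
  case (ES t1 t2) thus ?case using ES.IH(1)[of "Suc n" "Suc m"] by simp
qed auto

lemma swap_swap[simp]: "swap c (swap c t) = t"
  by (induction t arbitrary: c) auto

section \<open>Function-based reduction\<close>

fun Lval :: "trm \<Rightarrow> bool" where
  "Lval (Lam s) = True"
| "Lval (ES a b) = Lval a"
| "Lval _ = False"

fun goleft :: "calculus \<Rightarrow> trm \<Rightarrow> trm \<Rightarrow> bool" where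
  "goleft Name a b = True"
| "goleft Need a b = True"
| "goleft ValueLR a b = (\<not> Lval a)"
| "goleft ValueRL a b = Lval b"

fun hv :: "calculus \<Rightarrow> trm \<Rightarrow> nat option" where
  "hv c (Var i) = Some i"
| "hv c (Lam s) = None"
| "hv c (App a b) = (if goleft c a b then hv c a else hv c b)"
| "hv c (ES a b) = (case hv c a of None \<Rightarrow> None
     | Some 0 \<Rightarrow> (if c = Need then hv c b else None) | Some (Suc k) \<Rightarrow> Some k)"

fun hrep :: "calculus \<Rightarrow> trm \<Rightarrow> trm \<Rightarrow> trm" where
  "hrep c w (Var i) = w"
| "hrep c w (Lam s) = Lam s"
| "hrep c w (App a b) = (if goleft c a b then App (hrep c w a) b else App a (hrep c w b))"
| "hrep c w (ES a b) = (if hv c a = Some 0 then ES a (hrep c w b) else ES (hrep c (lift 0 1 w) a) b)"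

fun dbc :: "trm \<Rightarrow> trm \<Rightarrow> trm" where
  "dbc w (Lam s) = ES s w"
| "dbc w (ES a b) = ES (dbc (lift 0 1 w) a) b"
| "dbc w t = t"

fun lsvc :: "calculus \<Rightarrow> trm \<Rightarrow> trm \<Rightarrow> trm" where
  "lsvc c a (Lam s) = ES (hrep c (lift 0 1 (Lam s)) a) (Lam s)"
| "lsvc c a (ES u1 u2) = ES (lsvc c (lift 1 1 a) u1) u2"
| "lsvc c a t = t"

inductive rd :: "calculus \<Rightarrow> kind \<Rightarrow> trm \<Rightarrow> trm \<Rightarrow> bool" where
  r_dB: "Lval a \<Longrightarrow> (c = ValueLR \<or> c = ValueRL \<longrightarrow> Lval b) \<Longrightarrow> rd c M (App a b) (dbc b a)"
| r_ls: "hv c a = Some 0 \<Longrightarrow> c = Name \<Longrightarrow> rd c E (ES a u) (ES (hrep c (lift 0 1 u) a) u)"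
| r_lsv: "hv c a = Some 0 \<Longrightarrow> c \<noteq> Name \<Longrightarrow> Lval u \<Longrightarrow> rd c E (ES a u) (lsvc c a u)"
| r_appl: "rd c x a a' \<Longrightarrow> goleft c a b \<Longrightarrow> rd c x (App a b) (App a' b)"
| r_appr: "rd c x b b' \<Longrightarrow> \<not> goleft c a b \<Longrightarrow> rd c x (App a b) (App a b')"
| r_esl: "rd c x a a' \<Longrightarrow> rd c x (ES a b) (ES a' b)"
| r_esr: "rd c x b b' \<Longrightarrow> c = Need \<Longrightarrow> hv c a = Some 0 \<Longrightarrow> rd c x (ES a b) (ES a b')"

lemma lift_plug: "lift n k (plug C s) = plug (cshift n k C) (lift (n + depth C) k s)"
  by (induction C arbitrary: n) auto

lemma depth_cshift[simp]: "depth (cshift n k C) = depth C"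
  by (induction C arbitrary: n) auto

lemma Lval_plug: "is_L L \<Longrightarrow> Lval (plug L (Lam s))"
  by (induction rule: is_L.induct) auto

lemma Lval_E: "Lval a \<Longrightarrow> \<exists>L s. is_L L \<and> a = plug L (Lam s)"
proof (induction a)
  case (Lam s) thus ?case by (intro exI[of _ Hole]) (auto intro: is_L.intros)
next
  case (ES a b)
  then obtain L s where "is_L L" "a = plug L (Lam s)" by auto
  thus ?case by (intro exI[of _ "CESL L b"] exI[of _ s]) (auto intro: is_L.intros)
qed auto

lemma Lval_lift[simp]: "Lval (lift n k a) = Lval a"
  by (induction a arbitrary: n) auto

lemma dbc_plug: "is_L L \<Longrightarrow> dbc w (plug L (Lam s)) = plug L (ES s (lift 0 (depth L) w))"
proof (induction L arbitrary: w rule: is_L.induct)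
  case (2 L t) thus ?case by (simp add: lift_lift)
qed auto

lemma lsvc_plug: "is_L L \<Longrightarrow> lsvc c a (plug L (Lam s)) =
   plug L (ES (hrep c (lift 0 1 (Lam s)) (lift 1 (depth L) a)) (Lam s))"
proof (induction L arbitrary: a rule: is_L.induct)
  case (2 L t) thus ?case by (simp add: lift_lift)
qed auto

lemma not_Lval_plug_V: "is_V V \<Longrightarrow> \<not> Lval (plug V (Var i))"
  by (induction rule: is_V.induct) auto

lemma not_Lval_plug_S: "is_S V \<Longrightarrow> \<not> Lval (plug V (Var i))"
  by (induction rule: is_S.induct) auto

lemma hv_plug_H: "is_H C \<Longrightarrow> hv Name (plug C (Var (depth C + k))) = Some k
   \<and> hrep Name w (plug C (Var (depth C + k))) = plug C (lift 0 (depth C) w)"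
proof (induction arbitrary: k w rule: is_H.induct)
  case (3 H t) thus ?case using "3.IH"[of "Suc k" "lift 0 1 w"] by (simp add: lift_lift)
qed auto

lemma hv_plug_V: "is_V C \<Longrightarrow> hv ValueLR (plug C (Var (depth C + k))) = Some k
   \<and> hrep ValueLR w (plug C (Var (depth C + k))) = plug C (lift 0 (depth C) w)"
proof (induction arbitrary: k w rule: is_V.induct)
  case (2 V t) thus ?case using not_Lval_plug_V[of V] by simp
next
  case (3 L V t) thus ?case using Lval_plug[of L t] by simp
next
  case (4 V t) thus ?case using "4.IH"[of "Suc k" "lift 0 1 w"] by (simp add: lift_lift)
qed auto

lemma hv_plug_S: "is_S C \<Longrightarrow> hv ValueRL (plug C (Var (depth C + k))) = Some k
   \<and> hrep ValueRL w (plug C (Var (depth C + k))) = plug C (lift 0 (depth C) w)"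
proof (induction arbitrary: k w rule: is_S.induct)
  case (2 L S t) thus ?case using Lval_plug[of L t] by simp
next
  case (3 S t) thus ?case using not_Lval_plug_S[of S] by simp
next
  case (4 V t) thus ?case using "4.IH"[of "Suc k" "lift 0 1 w"] by (simp add: lift_lift)
qed auto

lemma hv_plug_N: "is_N C \<Longrightarrow> hv Need (plug C (Var (depth C + k))) = Some k
   \<and> hrep Need w (plug C (Var (depth C + k))) = plug C (lift 0 (depth C) w)"
proof (induction arbitrary: k w rule: is_N.induct)
  case (3 N t) thus ?case using "3.IH"[of "Suc k" "lift 0 1 w"] by (simp add: lift_lift)
next
  case (4 N' N) thus ?case using "4.IH"(1)[of 0] by simp
qed auto

lemma hv_plug: "evctx c C \<Longrightarrow> hv c (plug C (Var (depth C + k))) = Some k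
   \<and> hrep c w (plug C (Var (depth C + k))) = plug C (lift 0 (depth C) w)"
  by (cases c) (auto simp: hv_plug_H hv_plug_V hv_plug_S hv_plug_N)

lemma hv_E: "hv c a = Some k \<Longrightarrow> \<exists>C. evctx c C \<and> a = plug C (Var (depth C + k))"
proof (induction a arbitrary: k)
  case (Var i) thus ?case by (intro exI[of _ Hole]) (cases c; auto intro: is_H.intros is_V.intros is_S.intros is_N.intros)
next
  case (App a b)
  show ?case
  proof (cases "goleft c a b")
    case True
    with App obtain C where C: "evctx c C" "a = plug C (Var (depth C + k))" by auto
    show ?thesis
    proof (cases c)
      case ValueRL
      with True have "Lval b" by simp
      then obtain L s where "is_L L" "b = plug L (Lam s)" using Lval_E by blast
      thus ?thesis using C ValueRL by (intro exI[of _ "CAppL C b"]) (auto intro: is_S.intros)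
    qed (use C True in \<open>auto intro!: exI[of _ "CAppL C b"] intro: is_H.intros is_V.intros is_N.intros\<close>)
  next
    case False
    with App obtain C where C: "evctx c C" "b = plug C (Var (depth C + k))" by auto
    show ?thesis
    proof (cases c)
      case ValueLR
      with False have "Lval a" by simp
      then obtain L s where "is_L L" "a = plug L (Lam s)" using Lval_E by blast
      thus ?thesis using C ValueLR by (intro exI[of _ "CAppR a C"]) (auto intro: is_V.intros)
    qed (use C False in \<open>auto intro!: exI[of _ "CAppR a C"] intro: is_S.intros\<close>)
  qed
next
  case (ES a b)
  show ?case
  proof (cases "hv c a")
    case None thus ?thesis using ES by simp
  next
    case (Some j)
    show ?thesis
    proof (cases j)
      case 0
      with ES Some have cN: "c = Need" and hb: "hv c b = Some k" by (auto split: if_splits)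
      from ES.IH(2)[OF hb] obtain C where C: "evctx c C" "b = plug C (Var (depth C + k))" by auto
      from ES.IH(1)[of 0] Some 0 obtain C' where C': "evctx c C'" "a = plug C' (Var (depth C'))" by auto
      show ?thesis using C C' cN by (intro exI[of _ "CESR a C"]) (auto intro: is_N.intros)
    next
      case (Suc j')
      with ES Some have "k = j'" by simp
      from ES.IH(1)[of "Suc k"] Some Suc \<open>k = j'\<close> obtain C where C: "evctx c C" "a = plug C (Var (depth C + Suc k))" by auto
      thus ?thesis by (intro exI[of _ "CESL C b"]) (cases c; auto intro: is_H.intros is_V.intros is_S.intros is_N.intros)
    qed
  qed
qed auto

lemma isL_cshift: "is_L L \<Longrightarrow> is_L (cshift n k L)"
  by (induction L arbitrary: n rule: is_L.induct) (auto intro: is_L.intros)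

lemma evctx_cshift: "evctx c C \<Longrightarrow> evctx c (cshift n k C)"
proof (cases c)
  case Name
  have "is_H C \<Longrightarrow> is_H (cshift n k C)" for C
    by (induction C arbitrary: n rule: is_H.induct) (auto intro: is_H.intros)
  thus "evctx c C \<Longrightarrow> evctx c (cshift n k C)" using Name by simp
next
  case ValueLR
  have "is_V C \<Longrightarrow> is_V (cshift n k C)" for C
  proof (induction C arbitrary: n rule: is_V.induct)
    case (3 L V t)
    have "lift n k (plug L (Lam t)) = plug (cshift n k L) (Lam (lift (Suc (n + depth L)) k t))"
      by (simp add: lift_plug)
    thus ?case using 3 isL_cshift[OF 3(1)] by (auto intro: is_V.intros)
  qed (auto intro: is_V.intros)
  thus "evctx c C \<Longrightarrow> evctx c (cshift n k C)" using ValueLR by simp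
next
  case ValueRL
  have "is_S C \<Longrightarrow> is_S (cshift n k C)" for C
  proof (induction C arbitrary: n rule: is_S.induct)
    case (2 L S t)
    have "lift n k (plug L (Lam t)) = plug (cshift n k L) (Lam (lift (Suc (n + depth L)) k t))"
      by (simp add: lift_plug)
    thus ?case using 2 isL_cshift[OF 2(1)] by (auto intro: is_S.intros)
  qed (auto intro: is_S.intros)
  thus "evctx c C \<Longrightarrow> evctx c (cshift n k C)" using ValueRL by simp
next
  case Need
  have "is_N C \<Longrightarrow> is_N (cshift n k C)" for C
  proof (induction C arbitrary: n rule: is_N.induct)
    case (4 N' N)
    have "lift (Suc n) k (plug N' (Var (depth N'))) = plug (cshift (Suc n) k N') (Var (depth (cshift (Suc n) k N')))"
      by (simp add: lift_plug)
    thus ?case using 4 is_N.intros(4)[of "cshift (Suc n) k N'" "cshift n k N"] by simp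
  qed (auto intro: is_N.intros)
  thus "evctx c C \<Longrightarrow> evctx c (cshift n k C)" using Need by simp
qed

lemma evctx_Hole: "evctx c Hole"
  by (cases c) (auto intro: is_H.intros is_V.intros is_S.intros is_N.intros)

lemma lsvc_plug2: "is_L L \<Longrightarrow> evctx c C \<Longrightarrow>
  lsvc c (plug C (Var (depth C))) (plug L (Lam s)) =
  plug L (ES (plug (cshift 1 (depth L) C) (lift 0 (Suc (depth C)) (Lam s))) (Lam s))"
proof -
  assume L: "is_L L" and C: "evctx c C"
  have 1: "lift 1 (depth L) (plug C (Var (depth C))) = plug (cshift 1 (depth L) C) (Var (depth (cshift 1 (depth L) C) + 0))"
    by (simp add: lift_plug)
  have 2: "hrep c (lift 0 1 (Lam s)) (plug (cshift 1 (depth L) C) (Var (depth (cshift 1 (depth L) C) + 0)))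
     = plug (cshift 1 (depth L) C) (lift 0 (depth C) (lift 0 1 (Lam s)))"
    using hv_plug[OF evctx_cshift[OF C, where n=1 and k="depth L"], where k=0 and w="lift 0 1 (Lam s)"] by simp
  have 3: "lift 0 (depth C) (lift 0 1 (Lam s)) = lift 0 (Suc (depth C)) (Lam s)"
    using lift_lift[of 0 0 1 "depth C" "Lam s"] by simp
  show ?thesis using lsvc_plug[OF L] 1 2 3 by simp
qed

lemma Lval_hv: "Lval a \<Longrightarrow> hv c a = None"
  by (induction a) auto

lemma rd_notLval: "rd c x a a' \<Longrightarrow> \<not> Lval a"
  by (induction rule: rd.induct) (use Lval_hv in fastforce)+

lemma red_rd: "red c x t t' \<Longrightarrow> rd c x t t'"
proof -
  have root: "root c x s s' \<Longrightarrow> rd c x s s'" for s s'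
  proof (cases x)
    case M
    assume r: "root c x s s'"
    show ?thesis
    proof (cases "c = Name \<or> c = Need")
      case True
      with r M have "dB_root s s'" by (cases c) auto
      then show ?thesis
      proof cases
        case (1 L t u) thus ?thesis using M True Lval_plug[OF 1(3)] dbc_plug[OF 1(3)] r_dB[of "plug L (Lam t)" c u] by auto
      qed
    next
      case False
      with r M have "dBv_root s s'" by (cases c) auto
      then show ?thesis
      proof cases
        case (1 L L' t s0) thus ?thesis using M Lval_plug[OF 1(3)] Lval_plug[OF 1(4)] dbc_plug[OF 1(3)]
            r_dB[of "plug L (Lam t)" c "plug L' (Lam s0)"] by auto
      qed
    qed
  next
    case E
    assume r: "root c x s s'"
    show ?thesis
    proof (cases "c = Name")
      case True
      with r E have "ls_root is_H s s'" by simp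
      then show ?thesis
      proof cases
        case (1 C u)
        have "hv Name (plug C (Var (depth C))) = Some 0"
          and h: "hrep Name (lift 0 1 u) (plug C (Var (depth C))) = plug C (lift 0 (depth C) (lift 0 1 u))"
          using hv_plug_H[OF 1(3), where k=0 and w="lift 0 1 u"] by auto
        moreover have "lift 0 (depth C) (lift 0 1 u) = lift 0 (Suc (depth C)) u"
          using lift_lift[of 0 0 1 "depth C" u] by simp
        ultimately show ?thesis using 1 True E r_ls[of c "plug C (Var (depth C))" u] by simp
      qed
    next
      case False
      with r E have "lsv_root (evctx c) s s'" by (cases c) auto
      then show ?thesis
      proof cases
        case (1 C L s0)
        have "hv c (plug C (Var (depth C + 0))) = Some 0" using hv_plug[OF 1(3)] by blast
        thus ?thesis using 1 False E lsvc_plug2[OF 1(4) 1(3)] Lval_plug[OF 1(4)]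
          r_lsv[of c "plug C (Var (depth C))" "plug L (Lam s0)"] by simp
      qed
    qed
  qed
  assume "red c x t t'"
  then obtain Ev s s' where ev: "evctx c Ev" and rt: "root c x s s'" and t: "t = plug Ev s" "t' = plug Ev s'"
    unfolding red_def by blast
  have "rd c x (plug Ev s) (plug Ev s')"
  proof (cases c)
    case Name
    with ev have "is_H Ev" by simp
    thus ?thesis
      by (induction rule: is_H.induct) (use root rt Name in \<open>auto intro: rd.intros\<close>)
  next
    case ValueLR
    with ev have "is_V Ev" by simp
    thus ?thesis
    proof (induction rule: is_V.induct)
      case (2 V t) thus ?case using rd_notLval ValueLR by (auto intro: rd.intros)
    next
      case (3 L V t) thus ?case using Lval_plug[OF 3(1)] ValueLR by (auto intro: rd.intros)
    qed (use root rt in \<open>auto intro: rd.intros\<close>)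
  next
    case ValueRL
    with ev have "is_S Ev" by simp
    thus ?thesis
    proof (induction rule: is_S.induct)
      case (2 L S t) thus ?case using Lval_plug[OF 2(1)] ValueRL by (auto intro: rd.intros)
    next
      case (3 S t) thus ?case using rd_notLval ValueRL by (auto intro: rd.intros)
    qed (use root rt in \<open>auto intro: rd.intros\<close>)
  next
    case Need
    with ev have "is_N Ev" by simp
    thus ?thesis
    proof (induction rule: is_N.induct)
      case (4 N' N)
      have "hv Need (plug N' (Var (depth N' + 0))) = Some 0" using hv_plug_N[OF 4(1)] by blast
      thus ?case using 4 Need by (auto intro: rd.intros)
    qed (use root rt Need in \<open>auto intro: rd.intros\<close>)
  qed
  thus ?thesis using t by simp
qed

lemma rd_red: "rd c x t t' \<Longrightarrow> red c x t t'"
proof (induction rule: rd.induct)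
  case (r_dB a c b)
  then obtain L s where L: "is_L L" "a = plug L (Lam s)" using Lval_E by blast
  show ?case
  proof (cases "c = Name \<or> c = Need")
    case True
    hence "root c M (App a b) (dbc b a)" using L dbc_plug[OF L(1)] dB_root.intros[OF L(1), of s b] by (cases c) auto
    thus ?thesis unfolding red_def using evctx_Hole by (metis plug.simps(1))
  next
    case False
    with r_dB have "Lval b" by (cases c) auto
    then obtain L' s' where L': "is_L L'" "b = plug L' (Lam s')" using Lval_E by blast
    have "root c M (App a b) (dbc b a)" using False L L' dbc_plug[OF L(1)] dBv_root.intros[OF L(1) L'(1), of s s'] by (cases c) auto
    thus ?thesis unfolding red_def using evctx_Hole by (metis plug.simps(1))
  qed
next
  case (r_ls c a u)
  then obtain C where C: "evctx c C" "a = plug C (Var (depth C + 0))" using hv_E by blast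
  have h: "hrep c (lift 0 1 u) a = plug C (lift 0 (depth C) (lift 0 1 u))" using hv_plug[OF C(1)] C(2) by blast
  have "lift 0 (depth C) (lift 0 1 u) = lift 0 (Suc (depth C)) u"
    using lift_lift[of 0 0 1 "depth C" u] by simp
  hence "root c E (ES a u) (ES (hrep c (lift 0 1 u) a) u)" using r_ls C h ls_root.intros[of is_H C u] by simp
  thus ?case unfolding red_def using evctx_Hole by (metis plug.simps(1))
next
  case (r_lsv c a u)
  then obtain C where C: "evctx c C" "a = plug C (Var (depth C + 0))" using hv_E by blast
  from r_lsv obtain L s where L: "is_L L" "u = plug L (Lam s)" using Lval_E by blast
  have "root c E (ES a u) (lsvc c a u)"
    using r_lsv C L lsvc_plug2[OF L(1) C(1)] lsv_root.intros[OF _ L(1), of "evctx c" C s]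
    by (cases c) auto
  thus ?case unfolding red_def using evctx_Hole by (metis plug.simps(1))
next
  case (r_appl c x a a' b)
  then obtain Ev s s' where ev: "evctx c Ev" "root c x s s'" "a = plug Ev s" "a' = plug Ev s'"
    unfolding red_def by blast
  have "evctx c (CAppL Ev b)"
  proof (cases c)
    case ValueRL
    with r_appl have "Lval b" by simp
    then obtain L s where "is_L L" "b = plug L (Lam s)" using Lval_E by blast
    thus ?thesis using ev ValueRL by (auto intro: is_S.intros)
  qed (use ev in \<open>auto intro: is_H.intros is_V.intros is_N.intros\<close>)
  thus ?case unfolding red_def using ev by (intro exI[of _ "CAppL Ev b"]) auto
next
  case (r_appr c x b b' a)
  then obtain Ev s s' where ev: "evctx c Ev" "root c x s s'" "b = plug Ev s" "b' = plug Ev s'"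
    unfolding red_def by blast
  have "evctx c (CAppR a Ev)"
  proof (cases c)
    case ValueLR
    with r_appr have "Lval a" by simp
    then obtain L s where "is_L L" "a = plug L (Lam s)" using Lval_E by blast
    thus ?thesis using ev ValueLR by (auto intro: is_V.intros)
  qed (use ev r_appr in \<open>auto intro: is_S.intros\<close>)
  thus ?case unfolding red_def using ev by (intro exI[of _ "CAppR a Ev"]) auto
next
  case (r_esl c x a a' b)
  then obtain Ev s s' where ev: "evctx c Ev" "root c x s s'" "a = plug Ev s" "a' = plug Ev s'"
    unfolding red_def by blast
  have "evctx c (CESL Ev b)" using ev by (cases c) (auto intro: is_H.intros is_V.intros is_S.intros is_N.intros)
  thus ?case unfolding red_def using ev by (intro exI[of _ "CESL Ev b"]) auto
next
  case (r_esr c x b b' a)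
  then obtain Ev s s' where ev: "evctx c Ev" "root c x s s'" "b = plug Ev s" "b' = plug Ev s'"
    unfolding red_def by blast
  from r_esr obtain C where C: "evctx c C" "a = plug C (Var (depth C + 0))" using hv_E by blast
  have "evctx c (CESR a Ev)" using ev C r_esr by (auto intro: is_N.intros)
  thus ?case unfolding red_def using ev by (intro exI[of _ "CESR a Ev"]) auto
qed

lemma red_eq: "red c x = rd c x"
  using red_rd rd_red by blast




section \<open>General renaming\<close>

definition ext :: "(nat \<Rightarrow> nat) \<Rightarrow> nat \<Rightarrow> nat" where
  "ext f i = (case i of 0 \<Rightarrow> 0 | Suc j \<Rightarrow> Suc (f j))"

lemma ext_0[simp]: "ext f 0 = 0" and ext_Suc[simp]: "ext f (Suc j) = Suc (f j)"
  by (auto simp: ext_def)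

fun ren :: "(nat \<Rightarrow> nat) \<Rightarrow> trm \<Rightarrow> trm" where
  "ren f (Var i) = Var (f i)"
| "ren f (Lam t) = Lam (ren (ext f) t)"
| "ren f (App t u) = App (ren f t) (ren f u)"
| "ren f (ES t u) = ES (ren (ext f) t) (ren f u)"

lemma ren_ext: "(\<And>i. f i = g i) \<Longrightarrow> ren f t = ren g t"
proof -
  assume "\<And>i. f i = g i" hence "f = g" by auto
  thus ?thesis by simp
qed

lemma ext_comp: "ext f (ext g i) = ext (\<lambda>j. f (g j)) i"
  by (cases i) auto

lemma ren_ren[simp]: "ren f (ren g t) = ren (\<lambda>i. f (g i)) t"
proof (induction t arbitrary: f g)
  case (Lam t) thus ?case using ren_ext[of "\<lambda>i. ext f (ext g i)" "ext (\<lambda>j. f (g j))" t] ext_comp by simp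
next
  case (ES t u) thus ?case using ren_ext[of "\<lambda>i. ext f (ext g i)" "ext (\<lambda>j. f (g j))" t] ext_comp by simp
qed auto

lemma ext_id: "ext id = id" "ext (\<lambda>x. x) = (\<lambda>x. x)"
  by (auto simp: fun_eq_iff split: nat.split simp: ext_def)

lemma ren_id[simp]: "ren id t = t" "ren (\<lambda>x. x) t = t"
  by (induction t) (auto simp: ext_id)

definition liftf :: "nat \<Rightarrow> nat \<Rightarrow> nat \<Rightarrow> nat" where
  "liftf c k i = (if i < c then i else i + k)"

lemma ext_liftf: "ext (liftf c k) = liftf (Suc c) k"
  by (auto simp: fun_eq_iff liftf_def ext_def split: nat.split)

lemma lift_ren: "lift c k t = ren (liftf c k) t"
  by (induction t arbitrary: c) (auto simp: ext_liftf liftf_def)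

definition swapf :: "nat \<Rightarrow> nat \<Rightarrow> nat" where
  "swapf c i = (if i = c then Suc c else if i = Suc c then c else i)"

lemma ext_swapf: "ext (swapf c) = swapf (Suc c)"
  by (auto simp: fun_eq_iff swapf_def ext_def split: nat.split)

lemma swap_ren: "swap c t = ren (swapf c) t"
  by (induction t arbitrary: c) (auto simp: ext_swapf swapf_def)

definition mergef :: "nat \<Rightarrow> nat \<Rightarrow> nat" where
  "mergef c i = (if i \<le> c then i else i - 1)"

lemma mergef_app: "mergef c i = (if i \<le> c then i else i - 1)"
  by (simp add: mergef_def)

lemma ext_mergef: "ext (mergef c) = mergef (Suc c)"
  by (auto simp: fun_eq_iff mergef_def ext_def split: nat.split)

lemma ren_some_iff: "ren_some c t t' \<longleftrightarrow> ren (mergef c) t' = t"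
proof
  assume "ren_some c t t'" thus "ren (mergef c) t' = t"
    by (induction rule: ren_some.induct) (simp_all only: ren.simps ext_mergef; simp add: mergef_app)+
next
  assume "ren (mergef c) t' = t"
  thus "ren_some c t t'"
  proof (induction t' arbitrary: c t)
    case (Var i)
    show ?case
    proof (cases "i < c")
      case True thus ?thesis using Var by (auto simp: mergef_app intro: ren_some.intros)
    next
      case False
      hence "i = c \<or> i = Suc c \<or> i > Suc c" by auto
      thus ?thesis using Var ren_some.intros(2-4)[of c] ren_some.intros(4)[of c "i - 1"]
        by (auto simp: mergef_app)
    qed
  qed (simp_all add: ext_mergef; auto intro: ren_some.intros)+
qed

fun extn :: "nat \<Rightarrow> (nat \<Rightarrow> nat) \<Rightarrow> nat \<Rightarrow> nat" where
  "extn 0 f = f"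
| "extn (Suc n) f = ext (extn n f)"

fun cren :: "(nat \<Rightarrow> nat) \<Rightarrow> ctx \<Rightarrow> ctx" where
  "cren f Hole = Hole"
| "cren f (CAppL C t) = CAppL (cren f C) (ren f t)"
| "cren f (CAppR t C) = CAppR (ren f t) (cren f C)"
| "cren f (CESL C t) = CESL (cren (ext f) C) (ren f t)"
| "cren f (CESR t C) = CESR (ren (ext f) t) (cren f C)"

lemma depth_cren[simp]: "depth (cren f C) = depth C"
  by (induction C arbitrary: f) auto

lemma extn_ext: "extn n (ext f) = ext (extn n f)"
  by (induction n) auto

lemma ren_plug: "ren f (plug C s) = plug (cren f C) (ren (extn (depth C) f) s)"
proof (induction C arbitrary: f)
  case (CESL C t)
  thus ?case using extn_ext[of "depth C" f] by simp
qed auto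

lemma r_ls': "hv c a = Some 0 \<Longrightarrow> c = Name \<Longrightarrow> rd c E (ES a u) (ES (hrep c (lift 0 (Suc 0) u) a) u)"
  using r_ls by simp

lemma lift01_ren: "lift 0 (Suc 0) (ren f w) = ren (ext f) (lift 0 (Suc 0) w)"
  by (simp add: lift_ren, rule ren_ext, simp add: liftf_def)

lemma lift11_ren: "lift (Suc 0) (Suc 0) (ren (ext f) w) = ren (ext (ext f)) (lift (Suc 0) (Suc 0) w)"
  by (simp add: lift_ren, rule ren_ext, auto simp: liftf_def ext_def split: nat.split)

lemma lift01_ren_Lam: "Lam (lift (Suc 0) (Suc 0) (ren (ext f) s)) = ren (ext f) (Lam (lift (Suc 0) (Suc 0) s))"
  using lift01_ren[of f "Lam s"] by simp

lemma Lval_ren[simp]: "Lval (ren f t) = Lval t"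
  by (induction t arbitrary: f) auto

lemma goleft_ren[simp]: "goleft c (ren f a) (ren f b) = goleft c a b"
  by (cases c) auto

lemma hv_ren: "hv c (ren f t) = map_option f (hv c t)"
proof (induction t arbitrary: f)
  case (ES a b)
  show ?case
  proof (cases "hv c a")
    case (Some j) thus ?thesis using ES by (cases j) auto
  qed (use ES in auto)
qed auto

lemma hv_ren_ext0: "hv c (ren (ext f) a) = Some 0 \<longleftrightarrow> hv c a = Some 0"
  by (simp add: hv_ren) (metis ext_0 ext_Suc nat.distinct(1) not0_implies_Suc)

lemma hrep_ren: "hrep c (ren f w) (ren f t) = ren f (hrep c w t)"
proof (induction t arbitrary: f w)
  case (ES a b)
  thus ?case by (simp add: hv_ren_ext0 lift01_ren)
qed auto

lemma dbc_ren: "dbc (ren f w) (ren f a) = ren f (dbc w a)"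
proof (induction a arbitrary: f w)
  case (ES a b) thus ?case by (simp add: lift01_ren)
qed auto

lemma lsvc_ren: "lsvc c (ren (ext f) a) (ren f u) = ren f (lsvc c a u)"
proof (induction u arbitrary: f a)
  case (Lam s) thus ?case using hrep_ren[of c "ext f" "Lam (lift (Suc 0) (Suc 0) s)" a] by (simp add: lift11_ren)
next
  case (ES u1 u2) thus ?case by (simp add: lift11_ren)
qed auto

lemma rd_ren: "rd c x a a' \<Longrightarrow> rd c x (ren f a) (ren f a')"
proof (induction arbitrary: f rule: rd.induct)
  case (r_dB a c b) thus ?case using rd.r_dB[of "ren f a" c "ren f b"] by (simp add: dbc_ren)
next
  case (r_ls c a u) thus ?case using rd.r_ls[of c "ren (ext f) a" "ren f u"]
    by (simp add: hv_ren_ext0 lift01_ren hrep_ren)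
next
  case (r_lsv c a u) thus ?case using rd.r_lsv[of c "ren (ext f) a" "ren f u"]
    by (simp add: hv_ren_ext0 lsvc_ren)
next
  case (r_esr c x b b' a) thus ?case using rd.r_esr[of c x "ren f b" "ren f b'" "ren (ext f) a"]
    by (simp add: hv_ren_ext0)
qed (auto intro: rd.intros)

lemma ren_eq_App: "ren f a = App x y \<longleftrightarrow> (\<exists>a1 a2. a = App a1 a2 \<and> x = ren f a1 \<and> y = ren f a2)"
  by (cases a) auto

lemma ren_eq_ES: "ren f a = ES x y \<longleftrightarrow> (\<exists>a1 a2. a = ES a1 a2 \<and> x = ren (ext f) a1 \<and> y = ren f a2)"
  by (cases a) auto

lemma rd_ren_inv: "rd c x (ren f a) b \<Longrightarrow> \<exists>a'. b = ren f a' \<and> rd c x a a'"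
proof (induction "ren f a" b arbitrary: f a rule: rd.induct)
  case (r_dB a0 c b0)
  then obtain a1 a2 where "a = App a1 a2" "a0 = ren f a1" "b0 = ren f a2" by (metis ren_eq_App)
  thus ?case using r_dB by (intro exI[of _ "dbc a2 a1"]) (auto simp: dbc_ren intro: rd.intros)
next
  case (r_ls c a0 u)
  then obtain a1 a2 where a: "a = ES a1 a2" "a0 = ren (ext f) a1" "u = ren f a2" by (metis ren_eq_ES)
  thus ?case using r_ls by (intro exI[of _ "ES (hrep c (lift 0 1 a2) a1) a2"])
      (auto simp: hv_ren_ext0 lift01_ren hrep_ren intro: r_ls')
next
  case (r_lsv c a0 u)
  then obtain a1 a2 where a: "a = ES a1 a2" "a0 = ren (ext f) a1" "u = ren f a2" by (metis ren_eq_ES)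
  thus ?case using r_lsv by (intro exI[of _ "lsvc c a1 a2"])
      (auto simp: hv_ren_ext0 lsvc_ren intro: rd.intros)
next
  case (r_appl c x a0 a0' b0)
  then obtain a1 a2 where a: "a = App a1 a2" "a0 = ren f a1" "b0 = ren f a2" by (metis ren_eq_App)
  with r_appl obtain a' where "a0' = ren f a'" "rd c x a1 a'" by blast
  thus ?case using a r_appl by (intro exI[of _ "App a' a2"]) (auto intro: rd.intros)
next
  case (r_appr c x b0 b0' a0)
  then obtain a1 a2 where a: "a = App a1 a2" "a0 = ren f a1" "b0 = ren f a2" by (metis ren_eq_App)
  with r_appr obtain a' where "b0' = ren f a'" "rd c x a2 a'" by blast
  thus ?case using a r_appr by (intro exI[of _ "App a1 a'"]) (auto intro: rd.intros)
next
  case (r_esl c x a0 a0' b0)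
  then obtain a1 a2 where a: "a = ES a1 a2" "a0 = ren (ext f) a1" "b0 = ren f a2" by (metis ren_eq_ES)
  with r_esl obtain a' where "a0' = ren (ext f) a'" "rd c x a1 a'" by blast
  thus ?case using a r_esl by (intro exI[of _ "ES a' a2"]) (auto intro: rd.intros)
next
  case (r_esr c x b0 b0' a0)
  then obtain a1 a2 where a: "a = ES a1 a2" "a0 = ren (ext f) a1" "b0 = ren f a2" by (metis ren_eq_ES)
  with r_esr obtain a' where "b0' = ren f a'" "rd c x a2 a'" by blast
  thus ?case using a r_esr by (intro exI[of _ "ES a1 a'"]) (auto simp: hv_ren_ext0 intro: rd.intros)
qed




section \<open>Structural equivalence basics\<close>

lemma streq_refl[simp]: "streq c a a"
  by (simp add: streq_def)

lemma streq_sym: "streq c a b \<Longrightarrow> streq c b a"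
  unfolding streq_def by (rule equivclp_sym)

lemma streq_trans[trans]: "streq c a b \<Longrightarrow> streq c b d \<Longrightarrow> streq c a d"
  unfolding streq_def by (rule equivclp_trans)

lemma wclose_root: "R a b \<Longrightarrow> wclose R a b"
  unfolding wclose_def by (intro exI[of _ Hole]) auto

lemma ax_streq: "axioms c a b \<Longrightarrow> streq c a b"
  unfolding streq_def by (rule r_into_equivclp, rule wclose_root)

lemma equivclp_map: "(\<And>x y. R x y \<Longrightarrow> R (f x) (f y)) \<Longrightarrow> equivclp R a b \<Longrightarrow> equivclp R (f a) (f b)"
proof -
  assume h: "\<And>x y. R x y \<Longrightarrow> R (f x) (f y)" and e: "equivclp R a b"
  from e show ?thesis
  proof (induction rule: equivclp_induct)
    case base thus ?case by simp
  next
    case (step y z) thus ?case using h equivclp_into_equivclp by metis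
  qed
qed

lemma streq_map: "(\<And>W. \<exists>W'. \<forall>s. f (plug W s) = plug W' s) \<Longrightarrow> streq c a b \<Longrightarrow> streq c (f a) (f b)"
  unfolding streq_def
proof (rule equivclp_map[of "wclose (axioms c)" f a b])
  fix x y assume h: "\<And>W. \<exists>W'. \<forall>s. f (plug W s) = plug W' s" and "wclose (axioms c) x y"
  then obtain W s s' where "axioms c s s'" "x = plug W s" "y = plug W s'" unfolding wclose_def by blast
  moreover obtain W' where "\<forall>s. f (plug W s) = plug W' s" using h by blast
  ultimately show "wclose (axioms c) (f x) (f y)" unfolding wclose_def by auto
qed

lemma streq_AppL: "streq c a b \<Longrightarrow> streq c (App a w) (App b w)"
  by (rule streq_map[where f="\<lambda>x. App x w"]) (metis plug.simps(2))
lemma streq_AppR: "streq c a b \<Longrightarrow> streq c (App w a) (App w b)"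
  by (rule streq_map[where f="\<lambda>x. App w x"]) (metis plug.simps(3))
lemma streq_ESL: "streq c a b \<Longrightarrow> streq c (ES a w) (ES b w)"
  by (rule streq_map[where f="\<lambda>x. ES x w"]) (metis plug.simps(4))
lemma streq_ESR: "streq c a b \<Longrightarrow> streq c (ES w a) (ES w b)"
  by (rule streq_map[where f="\<lambda>x. ES w x"]) (metis plug.simps(5))

lemma streq_App: "streq c a a' \<Longrightarrow> streq c b b' \<Longrightarrow> streq c (App a b) (App a' b')"
  by (meson streq_AppL streq_AppR streq_trans)
lemma streq_ES: "streq c a a' \<Longrightarrow> streq c b b' \<Longrightarrow> streq c (ES a b) (ES a' b')"
  by (meson streq_ESL streq_ESR streq_trans)

lemma streq_plug: "streq c a b \<Longrightarrow> streq c (plug W a) (plug W b)"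
  by (induction W) (auto intro: streq_AppL streq_AppR streq_ESL streq_ESR)

inductive sx :: "calculus \<Rightarrow> trm \<Rightarrow> trm \<Rightarrow> bool" for c where
  sx_ax: "axioms c a b \<Longrightarrow> sx c a b"
| sx_axs: "axioms c b a \<Longrightarrow> sx c a b"
| sx_appl: "sx c a b \<Longrightarrow> sx c (App a w) (App b w)"
| sx_appr: "sx c a b \<Longrightarrow> sx c (App w a) (App w b)"
| sx_esl: "sx c a b \<Longrightarrow> sx c (ES a w) (ES b w)"
| sx_esr: "sx c a b \<Longrightarrow> sx c (ES w a) (ES w b)"

lemma sx_sym: "sx c a b \<Longrightarrow> sx c b a"
  by (induction rule: sx.induct) (auto intro: sx.intros)

lemma sx_streq: "sx c a b \<Longrightarrow> streq c a b"
  by (induction rule: sx.induct)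
     (auto intro: ax_streq streq_sym streq_AppL streq_AppR streq_ESL streq_ESR)

lemma wclose_sx: "wclose (axioms c) a b \<Longrightarrow> sx c a b"
proof -
  assume "wclose (axioms c) a b"
  then obtain W s s' where "axioms c s s'" "a = plug W s" "b = plug W s'" unfolding wclose_def by blast
  thus ?thesis by (induction W arbitrary: a b) (auto intro: sx.intros)
qed

lemma main_from_sim:
  assumes sim: "\<And>t u t'. sx c t u \<Longrightarrow> rd c x t t' \<Longrightarrow> \<exists>u'. rd c x u u' \<and> streq c t' u'"
  and "streq c t u" and "red c x t t'"
  shows "\<exists>u'. red c x u u' \<and> streq c t' u'"
proof -
  have "equivclp (wclose (axioms c)) t u" using assms(2) by (simp add: streq_def)
  hence "\<forall>t'. rd c x t t' \<longrightarrow> (\<exists>u'. rd c x u u' \<and> streq c t' u')"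
  proof (induction rule: converse_equivclp_induct)
    case base thus ?case by auto
  next
    case (step y z)
    hence "sx c y z" using wclose_sx sx_sym by blast
    show ?case
    proof (intro allI impI)
      fix y' assume "rd c x y y'"
      then obtain z' where "rd c x z z'" "streq c y' z'" using sim \<open>sx c y z\<close> by blast
      then obtain u' where "rd c x u u'" "streq c z' u'" using step.IH by blast
      thus "\<exists>u'. rd c x u u' \<and> streq c y' u'" using \<open>streq c y' z'\<close> streq_trans by blast
    qed
  qed
  thus ?thesis using assms(3) red_eq by metis
qed




section \<open>Invariants of single structural steps\<close>

lemma hv_lift: "hv c (lift n k t) = map_option (liftf n k) (hv c t)"
  by (simp add: lift_ren hv_ren)
lemma hv_swap: "hv c (swap n t) = map_option (swapf n) (hv c t)"
  by (simp add: swap_ren hv_ren)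
lemma Lval_swap[simp]: "Lval (swap n t) = Lval t"
  by (simp add: swap_ren)

lemma ax_Lval_hv: "axioms c a b \<Longrightarrow> Lval a = Lval b \<and> hv c a = hv c b"
proof (cases "c = Need")
  case True
  assume "axioms c a b"
  hence "need_ax a b" using True by simp
  thus ?thesis
  proof cases
    case (ax_appl t w u) thus ?thesis using True by (auto simp: hv_lift split: option.split nat.split)
  next
    case (ax_com t u w) thus ?thesis using True
      by (auto simp: hv_lift hv_swap liftf_def swapf_def split: option.split nat.split if_splits)
  next
    case (ax_sub t u w) thus ?thesis using True
      by (auto simp: hv_lift liftf_def split: option.split nat.split if_splits)
  qed
next
  case False
  assume "axioms c a b"
  hence "str_ax a b" using False by (cases c) auto
  thus ?thesis
  proof cases
    case (ax_gc u) thus ?thesis using False by (auto simp: hv_lift liftf_def split: option.split nat.split)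
  next
    case (ax_dup t t' u)
    hence t: "t = ren (mergef 0) t'" by (simp add: ren_some_iff)
    have "Lval t = Lval t'" using t by simp
    moreover have "hv c t = map_option (mergef 0) (hv c t')" using t by (simp add: hv_ren)
    ultimately show ?thesis using False ax_dup
      by (auto simp: hv_lift liftf_def mergef_app split: option.split nat.split)
  next
    case (ax_app t w u) thus ?thesis using False by (cases c) (auto split: option.split nat.split)
  next
    case (ax_com t u w) thus ?thesis using False
      by (auto simp: hv_lift hv_swap liftf_def swapf_def split: option.split nat.split if_splits)
  next
    case (ax_sub t u w) thus ?thesis using False
      by (auto simp: hv_lift liftf_def split: option.split nat.split if_splits)
  qed
qed

lemma sx_Lval_hv: "sx c a b \<Longrightarrow> Lval a = Lval b \<and> hv c a = hv c b"
proof (induction rule: sx.induct)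
  case (sx_ax a b) thus ?case using ax_Lval_hv by blast
next
  case (sx_axs b a) thus ?case using ax_Lval_hv by metis
next
  case (sx_appl a b w)
  hence "Lval a = Lval b" "hv c a = hv c b" by auto
  thus ?case by (cases c) simp_all
next
  case (sx_appr a b w)
  hence "Lval a = Lval b" "hv c a = hv c b" by auto
  thus ?case by (cases c) simp_all
qed (auto split: option.split nat.split)

lemma sx_Lval: "sx c a b \<Longrightarrow> Lval a = Lval b" and sx_hv: "sx c a b \<Longrightarrow> hv c a = hv c b"
  using sx_Lval_hv by blast+

lemma nat_cases3: "(i = 0 \<Longrightarrow> P) \<Longrightarrow> (i = 1 \<Longrightarrow> P) \<Longrightarrow> (\<And>j. i = Suc (Suc j) \<Longrightarrow> P) \<Longrightarrow> P"
  by (metis One_nat_def not0_implies_Suc)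

lemma swap0_ren: "swap 0 (ren (ext (ext f)) t) = ren (ext (ext f)) (swap 0 t)"
  by (simp add: swap_ren, rule ren_ext, auto simp: swapf_def ext_def split: nat.split)

lemma merge0_ren: "ren (mergef 0) (ren (ext (ext f)) t') = ren (ext f) (ren (mergef 0) t')"
  by (simp, rule ren_ext, auto simp: mergef_app ext_def split: nat.split)

lemma ax_ren: "axioms c a b \<Longrightarrow> axioms c (ren f a) (ren f b)"
proof (cases "c = Need")
  case True
  assume "axioms c a b"
  hence "need_ax a b" using True by simp
  hence "need_ax (ren f a) (ren f b)"
  proof cases
    case (ax_appl t w u) thus ?thesis using need_ax.ax_appl[of "ren (ext f) t" "ren f w" "ren f u"]
      by (simp add: lift01_ren)
  next
    case (ax_com t u w) thus ?thesis using need_ax.ax_com[of "ren (ext (ext f)) t" "ren f u" "ren f w"]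
      by (simp add: lift01_ren swap0_ren)
  next
    case (ax_sub t u w) thus ?thesis using need_ax.ax_sub[of "ren (ext f) t" "ren (ext f) u" "ren f w"]
      by (simp add: lift11_ren)
  qed
  thus ?thesis using True by simp
next
  case False
  assume "axioms c a b"
  hence s: "str_ax a b" using False by (cases c) auto
  have "str_ax (ren f a) (ren f b)"
    using s
  proof cases
    case (ax_gc u) thus ?thesis using str_ax.ax_gc[of "ren f b" "ren f u"] by (simp add: lift01_ren)
  next
    case (ax_dup t t' u)
    hence "ren_some 0 (ren (ext f) t) (ren (ext (ext f)) t')"
      using merge0_ren[of f t'] by (simp add: ren_some_iff)
    thus ?thesis using ax_dup str_ax.ax_dup[of "ren (ext f) t" "ren (ext (ext f)) t'" "ren f u"]
      by (simp add: lift01_ren)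
  next
    case (ax_app t w u) thus ?thesis using str_ax.ax_app[of "ren (ext f) t" "ren (ext f) w" "ren f u"] by simp
  next
    case (ax_com t u w) thus ?thesis using str_ax.ax_com[of "ren (ext (ext f)) t" "ren f u" "ren f w"]
      by (simp add: lift01_ren swap0_ren)
  next
    case (ax_sub t u w) thus ?thesis using str_ax.ax_sub[of "ren (ext f) t" "ren (ext f) u" "ren f w"]
      by (simp add: lift11_ren)
  qed
  thus ?thesis using False by (cases c) auto
qed

lemma sx_ren: "sx c a b \<Longrightarrow> sx c (ren f a) (ren f b)"
  by (induction arbitrary: f rule: sx.induct) (auto intro: sx.intros ax_ren)

lemma sx_lift: "sx c a b \<Longrightarrow> sx c (lift n k a) (lift n k b)"
  by (simp add: lift_ren sx_ren)

lemma hrep_lift: "hrep c (lift n k w) (lift n k t) = lift n k (hrep c w t)"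
  by (simp add: lift_ren hrep_ren)
lemma hrep_swap: "hrep c (swap n w) (swap n t) = swap n (hrep c w t)"
  by (simp add: swap_ren hrep_ren)

lemma lift_lift0: "lift 0 (Suc 0) (lift 0 (Suc 0) w) = lift 0 (Suc (Suc 0)) w"
  using lift_lift[of 0 0 1 1 w] by simp

lemma swap_lift02: "swap 0 (lift 0 (Suc (Suc 0)) w) = lift 0 (Suc (Suc 0)) w"
  by (simp add: swap_ren lift_ren, rule ren_ext, simp add: swapf_def liftf_def)

lemma merge_lift02: "ren (mergef 0) (lift 0 (Suc (Suc 0)) w) = lift 0 (Suc 0) w"
  by (simp add: lift_ren, rule ren_ext, simp add: mergef_app liftf_def)

lemma lift11_lift01: "lift (Suc 0) (Suc 0) (lift 0 (Suc 0) w) = lift 0 (Suc (Suc 0)) w"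
  using lift_lift[of 0 1 1 1 w] by simp

lemma hv_lift01_ne0: "hv c (lift 0 (Suc 0) t) \<noteq> Some 0"
  by (simp add: hv_lift liftf_def split: option.split)

lemma ax_hrep: "axioms c a b \<Longrightarrow> hv c a \<noteq> None \<Longrightarrow> sx c (hrep c w a) (hrep c w b)"
proof (cases "c = Need")
  case True
  assume "axioms c a b" and hv: "hv c a \<noteq> None"
  hence "need_ax a b" using True by simp
  thus ?thesis
  proof cases
    case (ax_appl t w0 u)
    show ?thesis
    proof (cases "hv c t = Some 0")
      case True
      thus ?thesis using ax_appl \<open>c = Need\<close> need_ax.ax_appl[of t w0 "hrep c w u"]
        by (auto intro: sx_ax)
    next
      case False
      thus ?thesis using ax_appl \<open>c = Need\<close> need_ax.ax_appl[of "hrep c (lift 0 1 w) t" w0 u]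
        by (auto intro: sx_ax)
    qed
  next
    case (ax_com t u z)
    obtain j where hj: "hv c t = Some j" using hv ax_com True
      by (auto split: option.splits nat.splits if_splits)
    consider "j = 0" | "j = 1" | j' where "j = Suc (Suc j')" by (metis One_nat_def not0_implies_Suc)
    thus ?thesis
    proof cases
      case 1
      have "hv c (swap 0 t) = Some 1" using hj 1 by (simp add: hv_swap swapf_def)
      moreover have "hrep c (lift 0 1 w) (lift 0 1 u) = lift 0 1 (hrep c w u)" by (rule hrep_lift)
      ultimately show ?thesis using ax_com True hj 1 hv need_ax.ax_com[of t "hrep c w u" z]
        by (auto simp: hv_lift01_ne0 intro: sx_ax)
    next
      case 2
      have "hv c (swap 0 t) = Some 0" using hj 2 by (simp add: hv_swap swapf_def)
      moreover have "hrep c (lift 0 1 w) (lift 0 1 z) = lift 0 1 (hrep c w z)" by (rule hrep_lift)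
      ultimately show ?thesis using ax_com True hj 2 hv need_ax.ax_com[of t u "hrep c w z"]
        by (auto simp: hv_lift01_ne0 intro: sx_ax)
    next
      case 3
      have "hv c (swap 0 t) = Some j" using hj 3 by (simp add: hv_swap swapf_def)
      moreover have "swap 0 (hrep c (lift 0 (Suc (Suc 0)) w) t) = hrep c (lift 0 (Suc (Suc 0)) w) (swap 0 t)"
        using hrep_swap[of c 0 "lift 0 (Suc (Suc 0)) w" t] swap_lift02 by simp
      ultimately show ?thesis using ax_com True hj 3 hv need_ax.ax_com[of "hrep c (lift 0 (Suc (Suc 0)) w) t" u z]
        by (auto simp: lift_lift0 intro: sx_ax)
    qed
  next
    case (ax_sub t u z)
    obtain j where hj: "hv c t = Some j" using hv ax_sub True
      by (auto simp: hv_lift split: option.splits nat.splits if_splits)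
    show ?thesis
    proof (cases j)
      case 0
      hence hj0: "hv c t = Some 0" using hj by simp
      have hl: "hv c (lift 1 1 t) = Some 0" using hj 0 by (simp add: hv_lift liftf_def)
      obtain k where hk: "hv c u = Some k" using hv ax_sub True hl
        by (auto split: option.splits nat.splits if_splits)
      show ?thesis
      proof (cases k)
        case 0 thus ?thesis using ax_sub True hj0 hl hk need_ax.ax_sub[of t u "hrep c w z"]
          by (auto intro: sx_ax)
      next
        case (Suc k')
        thus ?thesis using ax_sub True hj0 hl hk need_ax.ax_sub[of t "hrep c (lift 0 1 w) u" z]
          by (auto intro: sx_ax)
      qed
    next
      case (Suc j')
      have hl: "hv c (lift 1 1 t) = Some (Suc (Suc j'))" using hj Suc by (simp add: hv_lift liftf_def)
      have "lift 1 1 (hrep c (lift 0 1 w) t) = hrep c (lift 0 (Suc (Suc 0)) w) (lift 1 1 t)"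
        using hrep_lift[of c 1 1 "lift 0 1 w" t] lift11_lift01 by simp
      thus ?thesis using ax_sub True hj hl Suc need_ax.ax_sub[of "hrep c (lift 0 1 w) t" u z]
        by (auto simp: lift_lift0 intro: sx_ax)
    qed
  qed
next
  case False
  assume "axioms c a b" and hv: "hv c a \<noteq> None"
  hence s: "str_ax a b" using False by (cases c) auto
  have "str_ax (hrep c w a) (hrep c w b)"
    using s
  proof cases
    case (ax_gc u)
    thus ?thesis using str_ax.ax_gc[of "hrep c w b" u] hrep_lift[of c 0 1 w b]
      by (simp add: hv_lift01_ne0)
  next
    case (ax_dup t t' u)
    obtain j where hj: "hv c t = Some (Suc j)" using hv ax_dup False
      by (auto split: option.splits nat.splits if_splits)
    have tt: "t = ren (mergef 0) t'" using ax_dup by (simp add: ren_some_iff)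
    then obtain i where hi: "hv c t' = Some i" "mergef 0 i = Suc j" using hj by (auto simp: hv_ren)
    hence i: "i = Suc (Suc j)" by (auto simp: mergef_app split: if_splits)
    have "ren_some 0 (hrep c (lift 0 1 w) t) (hrep c (lift 0 (Suc (Suc 0)) w) t')"
      using tt hrep_ren[of c "mergef 0" "lift 0 (Suc (Suc 0)) w" t'] merge_lift02 by (simp add: ren_some_iff)
    thus ?thesis using ax_dup hj hi i str_ax.ax_dup[of "hrep c (lift 0 1 w) t" "hrep c (lift 0 (Suc (Suc 0)) w) t'" u]
      by (simp add: lift_lift0 hv_lift01_ne0)
  next
    case (ax_app t w0 u)
    have "hv c (App t w0) \<noteq> Some 0" using hv ax_app False by auto
    moreover have "goleft c (ES t u) (ES w0 u) = goleft c t w0" by (cases c) auto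
    ultimately show ?thesis using ax_app str_ax.ax_app by (auto split: if_splits)
  next
    case (ax_com t u z)
    obtain j where hj: "hv c t = Some (Suc (Suc j))" using hv ax_com False
      by (auto split: option.splits nat.splits if_splits)
    have "hv c (swap 0 t) = Some (Suc (Suc j))" using hj by (simp add: hv_swap swapf_def)
    moreover have "swap 0 (hrep c (lift 0 (Suc (Suc 0)) w) t) = hrep c (lift 0 (Suc (Suc 0)) w) (swap 0 t)"
      using hrep_swap[of c 0 "lift 0 (Suc (Suc 0)) w" t] swap_lift02 by simp
    ultimately show ?thesis using ax_com hj str_ax.ax_com[of "hrep c (lift 0 (Suc (Suc 0)) w) t" u z]
      by (simp add: lift_lift0 hv_lift01_ne0)
  next
    case (ax_sub t u z)
    obtain j where hj: "hv c (lift 1 1 t) = Some j" using hv ax_sub False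
      by (auto split: option.splits nat.splits if_splits)
    have "j \<noteq> 0" using hj hv ax_sub False by (auto split: option.splits nat.splits if_splits)
    moreover have "j \<noteq> 1" using hj by (auto simp: hv_lift liftf_def split: if_splits)
    ultimately obtain j' where j': "j = Suc (Suc j')" by (metis One_nat_def not0_implies_Suc)
    have ht: "hv c t = Some (Suc j')" using hj j' by (auto simp: hv_lift liftf_def split: if_splits)
    have "lift 1 1 (hrep c (lift 0 1 w) t) = hrep c (lift 0 (Suc (Suc 0)) w) (lift 1 1 t)"
      using hrep_lift[of c 1 1 "lift 0 1 w" t] lift11_lift01 by simp
    thus ?thesis using ax_sub hj j' ht str_ax.ax_sub[of "hrep c (lift 0 1 w) t" u z]
      by (simp add: lift_lift0)
  qed
  thus ?thesis using False by (cases c) (auto intro: sx_ax)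
qed

lemma sx_hrep: "sx c a b \<Longrightarrow> hv c a \<noteq> None \<Longrightarrow> sx c (hrep c w a) (hrep c w b)"
proof (induction arbitrary: w rule: sx.induct)
  case (sx_ax a b) thus ?case using ax_hrep by blast
next
  case (sx_axs b a)
  hence "hv c b \<noteq> None" using ax_Lval_hv by metis
  thus ?case using ax_hrep[OF sx_axs(1)] sx_sym by blast
next
  case (sx_appl a b w0)
  have e: "goleft c a w0 = goleft c b w0" using sx_Lval[OF sx_appl(1)] by (cases c) auto
  thus ?case using sx_appl by (auto intro: sx.intros)
next
  case (sx_appr a b w0)
  have e: "goleft c w0 a = goleft c w0 b" using sx_Lval[OF sx_appr(1)] by (cases c) auto
  thus ?case using sx_appr by (auto intro: sx.intros)
next
  case (sx_esl a b w0)
  have e: "hv c a = hv c b" using sx_hv[OF sx_esl(1)] .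
  show ?case
  proof (cases "hv c a = Some 0")
    case True thus ?thesis using e sx_esl(1) by (auto intro: sx.intros)
  next
    case False
    hence "hv c a \<noteq> None" using sx_esl(3) by (auto split: option.splits nat.splits)
    thus ?thesis using False e sx_esl by (auto intro: sx.intros)
  qed
next
  case (sx_esr a b w0)
  show ?case
  proof (cases "hv c w0 = Some 0")
    case True
    hence "hv c a \<noteq> None" using sx_esr(3) by (auto split: if_splits)
    thus ?thesis using True sx_esr by (auto intro: sx.intros)
  next
    case False thus ?thesis by (auto intro: sx.intros sx_esr)
  qed
qed

lemma dbc_lift: "dbc (lift n k w) (lift n k a) = lift n k (dbc w a)"
  by (simp add: lift_ren dbc_ren)
lemma dbc_swap: "dbc (swap n w) (swap n a) = swap n (dbc w a)"
  by (simp add: swap_ren dbc_ren)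

lemma ax_dbc: "axioms c a b \<Longrightarrow> Lval a \<Longrightarrow> sx c (dbc w a) (dbc w b)"
proof -
  assume ab: "axioms c a b" and La: "Lval a"
  have "axioms c (dbc w a) (dbc w b)"
  proof (cases "c = Need")
    case True
    hence "need_ax a b" using ab by simp
    hence "need_ax (dbc w a) (dbc w b)"
    proof cases
      case (ax_appl t w0 u) thus ?thesis using La by simp
    next
      case (ax_com t u z)
      have "swap 0 (dbc (lift 0 (Suc (Suc 0)) w) t) = dbc (lift 0 (Suc (Suc 0)) w) (swap 0 t)"
        using dbc_swap[of 0 "lift 0 (Suc (Suc 0)) w" t] swap_lift02 by simp
      thus ?thesis using ax_com need_ax.ax_com[of "dbc (lift 0 (Suc (Suc 0)) w) t" u z] by (simp add: lift_lift0)
    next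
      case (ax_sub t u z)
      have "lift 1 1 (dbc (lift 0 1 w) t) = dbc (lift 0 (Suc (Suc 0)) w) (lift 1 1 t)"
        using dbc_lift[of 1 1 "lift 0 1 w" t] lift11_lift01 by simp
      thus ?thesis using ax_sub need_ax.ax_sub[of "dbc (lift 0 1 w) t" u z] by (simp add: lift_lift0)
    qed
    thus ?thesis using True by simp
  next
    case False
    hence "str_ax a b" using ab by (cases c) auto
    hence "str_ax (dbc w a) (dbc w b)"
    proof cases
      case (ax_gc u) thus ?thesis using str_ax.ax_gc[of "dbc w b" u] dbc_lift[of 0 1 w b] by simp
    next
      case (ax_dup t t' u)
      have tt: "t = ren (mergef 0) t'" using ax_dup by (simp add: ren_some_iff)
      have "ren_some 0 (dbc (lift 0 1 w) t) (dbc (lift 0 (Suc (Suc 0)) w) t')"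
        using tt dbc_ren[of "mergef 0" "lift 0 (Suc (Suc 0)) w" t'] merge_lift02 by (simp add: ren_some_iff)
      thus ?thesis using ax_dup str_ax.ax_dup[of "dbc (lift 0 1 w) t" "dbc (lift 0 (Suc (Suc 0)) w) t'" u]
        by (simp add: lift_lift0)
    next
      case (ax_app t w0 u) thus ?thesis using La by simp
    next
      case (ax_com t u z)
      have "swap 0 (dbc (lift 0 (Suc (Suc 0)) w) t) = dbc (lift 0 (Suc (Suc 0)) w) (swap 0 t)"
        using dbc_swap[of 0 "lift 0 (Suc (Suc 0)) w" t] swap_lift02 by simp
      thus ?thesis using ax_com str_ax.ax_com[of "dbc (lift 0 (Suc (Suc 0)) w) t" u z] by (simp add: lift_lift0)
    next
      case (ax_sub t u z)
      have "lift 1 1 (dbc (lift 0 1 w) t) = dbc (lift 0 (Suc (Suc 0)) w) (lift 1 1 t)"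
        using dbc_lift[of 1 1 "lift 0 1 w" t] lift11_lift01 by simp
      thus ?thesis using ax_sub str_ax.ax_sub[of "dbc (lift 0 1 w) t" u z] by (simp add: lift_lift0)
    qed
    thus ?thesis using False by (cases c) auto
  qed
  thus ?thesis by (rule sx_ax)
qed

lemma sx_dbc: "sx c a b \<Longrightarrow> Lval a \<Longrightarrow> sx c (dbc w a) (dbc w b)"
proof (induction arbitrary: w rule: sx.induct)
  case (sx_ax a b) thus ?case using ax_dbc by blast
next
  case (sx_axs b a)
  hence "Lval b" using ax_Lval_hv by metis
  thus ?case using ax_dbc[OF sx_axs(1)] sx_sym by blast
qed (auto intro: sx.intros)

lemma sx_dbc_arg: "sx c a b \<Longrightarrow> Lval f \<Longrightarrow> sx c (dbc a f) (dbc b f)"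
proof (induction f arbitrary: a b)
  case (ES f1 f2) thus ?case using ES.IH(1)[OF sx_lift[OF ES.prems(1), of 0 1]] by (auto intro: sx.intros)
qed (auto intro: sx.intros)

lemma lsvc_lift: "lsvc c (lift (Suc n) k a) (lift n k u) = lift n k (lsvc c a u)"
  using lsvc_ren[of c "liftf n k" a u] by (simp add: lift_ren ext_liftf)

lemma lsvc_swap: "lsvc c (swap (Suc n) a) (swap n u) = swap n (lsvc c a u)"
  using lsvc_ren[of c "swapf n" a u] by (simp add: swap_ren ext_swapf)

lemma ax_lsvc: "axioms c a b \<Longrightarrow> Lval a \<Longrightarrow> sx c (lsvc c t a) (lsvc c t b)"
proof -
  assume ab: "axioms c a b" and La: "Lval a"
  have com: "swap 0 (lsvc c (lift (Suc 0) (Suc 0) (lift (Suc 0) (Suc 0) t)) a1)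
     = lsvc c (lift (Suc 0) (Suc 0) (lift (Suc 0) (Suc 0) t)) (swap 0 a1)" for a1
  proof -
    have "swap 1 (lift (Suc 0) (Suc 0) (lift (Suc 0) (Suc 0) t)) = lift (Suc 0) (Suc 0) (lift (Suc 0) (Suc 0) t)"
      by (simp add: swap_ren lift_ren, rule ren_ext, auto simp: swapf_def liftf_def)
    thus ?thesis using lsvc_swap[of c 0 "lift (Suc 0) (Suc 0) (lift (Suc 0) (Suc 0) t)" a1] by simp
  qed
  have sub: "lift 1 1 (lsvc c (lift 1 1 t) a1) = lsvc c (lift (Suc 0) (Suc 0) (lift (Suc 0) (Suc 0) t)) (lift 1 1 a1)" for a1
  proof -
    have "lift (Suc (Suc 0)) (Suc 0) (lift (Suc 0) (Suc 0) t) = lift (Suc 0) (Suc 0) (lift (Suc 0) (Suc 0) t)"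
      by (simp add: lift_ren, rule ren_ext, auto simp: liftf_def)
    thus ?thesis using lsvc_lift[of c 1 1 "lift 1 1 t" a1] by simp
  qed
  have "axioms c (lsvc c t a) (lsvc c t b)"
  proof (cases "c = Need")
    case True
    hence "need_ax a b" using ab by simp
    hence "need_ax (lsvc c t a) (lsvc c t b)"
    proof cases
      case (ax_appl t0 w0 u) thus ?thesis using La by simp
    next
      case (ax_com t0 u z)
      thus ?thesis using com need_ax.ax_com[of "lsvc c (lift (Suc 0) (Suc 0) (lift (Suc 0) (Suc 0) t)) t0" u z] by simp
    next
      case (ax_sub t0 u z)
      thus ?thesis using sub need_ax.ax_sub[of "lsvc c (lift 1 1 t) t0" u z] by simp
    qed
    thus ?thesis using True by simp
  next
    case False
    hence "str_ax a b" using ab by (cases c) auto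
    hence "str_ax (lsvc c t a) (lsvc c t b)"
    proof cases
      case (ax_gc u) thus ?thesis using str_ax.ax_gc[of "lsvc c t b" u] lsvc_lift[of c 0 1 t b] by simp
    next
      case (ax_dup t0 t' u)
      have tt: "t0 = ren (mergef 0) t'" using ax_dup by (simp add: ren_some_iff)
      have e: "ren (mergef (Suc 0)) (lift (Suc 0) (Suc 0) (lift (Suc 0) (Suc 0) t)) = lift (Suc 0) (Suc 0) t"
        by (simp add: lift_ren, rule ren_ext, auto simp: liftf_def mergef_app)
      have "ren_some 0 (lsvc c (lift 1 1 t) t0) (lsvc c (lift (Suc 0) (Suc 0) (lift (Suc 0) (Suc 0) t)) t')"
        using tt lsvc_ren[of c "mergef 0" "lift (Suc 0) (Suc 0) (lift (Suc 0) (Suc 0) t)" t'] e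
        by (simp add: ren_some_iff ext_mergef)
      thus ?thesis using ax_dup str_ax.ax_dup[of "lsvc c (lift 1 1 t) t0" _ u] by simp
    next
      case (ax_app t0 w0 u) thus ?thesis using La by simp
    next
      case (ax_com t0 u z)
      thus ?thesis using com str_ax.ax_com[of "lsvc c (lift (Suc 0) (Suc 0) (lift (Suc 0) (Suc 0) t)) t0" u z] by simp
    next
      case (ax_sub t0 u z)
      thus ?thesis using sub str_ax.ax_sub[of "lsvc c (lift 1 1 t) t0" u z] by simp
    qed
    thus ?thesis using False by (cases c) auto
  qed
  thus ?thesis by (rule sx_ax)
qed

lemma sx_lsvc: "sx c a b \<Longrightarrow> Lval a \<Longrightarrow> sx c (lsvc c t a) (lsvc c t b)"
proof (induction arbitrary: t rule: sx.induct)
  case (sx_ax a b) thus ?case using ax_lsvc by blast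
next
  case (sx_axs b a)
  hence "Lval b" using ax_Lval_hv by metis
  thus ?case using ax_lsvc[OF sx_axs(1)] sx_sym by blast
qed (auto intro: sx.intros)

lemma sx_lsvc_body: "sx c a b \<Longrightarrow> hv c a = Some 0 \<Longrightarrow> Lval u \<Longrightarrow> sx c (lsvc c a u) (lsvc c b u)"
proof (induction u arbitrary: a b)
  case (Lam s)
  have "hv c a \<noteq> None" using Lam.prems by simp
  thus ?case using sx_hrep[OF Lam.prems(1)] by (auto intro: sx.intros)
next
  case (ES u1 u2)
  have "hv c (lift 1 1 a) = Some 0" using ES.prems by (simp add: hv_lift liftf_def)
  thus ?case using ES.IH(1)[OF sx_lift[OF ES.prems(1), of 1 1]] ES.prems(3) by (auto intro: sx.intros)
qed (auto intro: sx.intros)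

lemma sx_hrep_arg: "sx c a b \<Longrightarrow> hv c t \<noteq> None \<Longrightarrow> sx c (hrep c a t) (hrep c b t)"
proof (induction t arbitrary: a b)
  case (ES t1 t2)
  show ?case
  proof (cases "hv c t1 = Some 0")
    case True thus ?thesis using ES by (auto intro: sx.intros split: if_splits)
  next
    case False
    hence "hv c t1 \<noteq> None" using ES.prems by (auto split: option.splits nat.splits)
    thus ?thesis using False ES.IH(1)[OF sx_lift[OF ES.prems(1), of 0 1]] by (auto intro: sx.intros)
  qed
qed (auto intro: sx.intros split: if_splits)




inductive_cases rdE_App: "rd c x (App a b) t'"
inductive_cases rdE_ES: "rd c x (ES a b) t'"
inductive_cases rdE_Var: "rd c x (Var i) t'"
inductive_cases rdE_Lam: "rd c x (Lam s) t'"

lemma goleft_cong: "Lval a = Lval a' \<Longrightarrow> Lval b = Lval b' \<Longrightarrow> goleft c a b = goleft c a' b'"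
  by (cases c) auto

lemma sim_from_root:
  assumes root: "\<And>t u t'. axioms c t u \<or> axioms c u t \<Longrightarrow> rd c x t t' \<Longrightarrow> \<exists>u'. rd c x u u' \<and> streq c t' u'"
  shows "sx c t u \<Longrightarrow> rd c x t t' \<Longrightarrow> \<exists>u'. rd c x u u' \<and> streq c t' u'"
proof (induction arbitrary: t' rule: sx.induct)
  case (sx_ax a b) thus ?case using root by blast
next
  case (sx_axs b a) thus ?case using root by blast
next
  case (sx_appl a b w)
  have L: "Lval a = Lval b" using sx_Lval[OF sx_appl(1)] .
  from sx_appl.prems show ?case
  proof cases
    case r_dB thus ?thesis using L sx_dbc[OF sx_appl(1)] by (auto intro!: exI[of _ "dbc w b"] rd.r_dB sx_streq)
  next
    case (r_appl a')
    then obtain b' where "rd c x b b'" "streq c a' b'" using sx_appl.IH by blast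
    thus ?thesis using r_appl goleft_cong[OF L refl, where c=c and b=w] by (auto intro!: exI[of _ "App b' w"] rd.r_appl streq_AppL)
  next
    case (r_appr w')
    thus ?thesis using goleft_cong[OF L refl, where c=c and b=w] sx_appl(1)
      by (auto intro!: exI[of _ "App b w'"] rd.r_appr sx_streq sx.intros)
  qed
next
  case (sx_appr a b w)
  have L: "Lval a = Lval b" using sx_Lval[OF sx_appr(1)] .
  from sx_appr.prems show ?case
  proof cases
    case r_dB thus ?thesis using L sx_dbc_arg[OF sx_appr(1)] by (auto intro!: exI[of _ "dbc b w"] rd.r_dB sx_streq)
  next
    case (r_appl w')
    thus ?thesis using goleft_cong[OF refl L, where c=c and a=w] sx_appr(1)
      by (auto intro!: exI[of _ "App w' b"] rd.r_appl sx_streq sx.intros)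
  next
    case (r_appr a')
    then obtain b' where "rd c x b b'" "streq c a' b'" using sx_appr.IH by blast
    thus ?thesis using r_appr goleft_cong[OF refl L, where c=c and a=w] by (auto intro!: exI[of _ "App w b'"] rd.r_appr streq_AppR)
  qed
next
  case (sx_esl a b w)
  have H: "hv c a = hv c b" using sx_hv[OF sx_esl(1)] .
  from sx_esl.prems show ?case
  proof cases
    case r_ls
    have "sx c (hrep c (lift 0 1 w) a) (hrep c (lift 0 1 w) b)" using sx_hrep[OF sx_esl(1)] r_ls by simp
    hence "streq c (ES (hrep c (lift 0 1 w) a) w) (ES (hrep c (lift 0 1 w) b) w)"
      by (intro sx_streq sx.sx_esl)
    thus ?thesis using r_ls H by (auto intro!: exI[of _ "ES (hrep c (lift 0 1 w) b) w"] r_ls')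
  next
    case r_lsv
    thus ?thesis using H sx_lsvc_body[OF sx_esl(1)] by (auto intro!: exI[of _ "lsvc c b w"] rd.r_lsv sx_streq)
  next
    case (r_esl a')
    then obtain b' where "rd c x b b'" "streq c a' b'" using sx_esl.IH by blast
    thus ?thesis using r_esl by (auto intro!: exI[of _ "ES b' w"] rd.r_esl streq_ESL)
  next
    case (r_esr w')
    thus ?thesis using H sx_esl(1) by (auto intro!: exI[of _ "ES b w'"] rd.r_esr sx_streq sx.intros)
  qed
next
  case (sx_esr a b w)
  have L: "Lval a = Lval b" using sx_Lval[OF sx_esr(1)] .
  from sx_esr.prems show ?case
  proof cases
    case r_ls
    have "hv c w \<noteq> None" using r_ls by simp
    hence 1: "sx c (hrep c (lift 0 1 a) w) (hrep c (lift 0 1 b) w)"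
      using sx_hrep_arg[OF sx_lift[OF sx_esr(1)]] by simp
    have "streq c (ES (hrep c (lift 0 1 a) w) a) (ES (hrep c (lift 0 1 b) w) b)"
      using streq_ES[OF sx_streq[OF 1] sx_streq[OF sx_esr(1)]] .
    thus ?thesis using r_ls by (auto intro!: exI[of _ "ES (hrep c (lift 0 1 b) w) b"] r_ls')
  next
    case r_lsv
    thus ?thesis using L sx_lsvc[OF sx_esr(1)] by (auto intro!: exI[of _ "lsvc c w b"] rd.r_lsv sx_streq)
  next
    case (r_esl w')
    thus ?thesis using sx_esr(1) by (auto intro!: exI[of _ "ES w' b"] rd.r_esl sx_streq sx.intros)
  next
    case (r_esr a')
    then obtain b' where "rd c x b b'" "streq c a' b'" using sx_esr.IH by blast
    thus ?thesis using r_esr by (auto intro!: exI[of _ "ES w b'"] rd.r_esr streq_ESR)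
  qed
qed




lemma eq_gc: "c \<noteq> Need \<Longrightarrow> streq c (ES (lift 0 1 t) u) t"
  by (rule ax_streq) (cases c, auto intro: str_ax.intros[simplified])

lemma eq_dup: "c \<noteq> Need \<Longrightarrow> ren (mergef 0) t' = t \<Longrightarrow> streq c (ES t u) (ES (ES t' (lift 0 1 u)) u)"
  by (rule ax_streq) (cases c, auto intro: str_ax.intros[simplified] simp: ren_some_iff)

lemma eq_app: "c \<noteq> Need \<Longrightarrow> streq c (ES (App t w) u) (App (ES t u) (ES w u))"
  by (rule ax_streq) (cases c, auto intro: str_ax.intros[simplified])

lemma eq_com: "streq c (ES (ES t (lift 0 1 u)) w) (ES (ES (swap 0 t) (lift 0 1 w)) u)"
  by (rule ax_streq) (cases c, auto intro: str_ax.intros[simplified] need_ax.intros[simplified])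

lemma eq_sub: "streq c (ES (ES (lift 1 1 t) u) w) (ES t (ES u w))"
  by (rule ax_streq) (cases c, auto intro: str_ax.intros[simplified] need_ax.intros[simplified])

lemma eq_appl: "streq c (ES (App t (lift 0 1 w)) u) (App (ES t u) w)"
proof (cases "c = Need")
  case True thus ?thesis by (intro ax_streq) (auto intro: need_ax.intros[simplified])
next
  case False
  have "streq c (ES (App t (lift 0 1 w)) u) (App (ES t u) (ES (lift 0 1 w) u))" using eq_app[OF False] .
  also have "streq c \<dots> (App (ES t u) w)" by (rule streq_AppR, rule eq_gc[OF False])
  finally show ?thesis .
qed

lemma extn_app: "extn n f i = (if i < n then i else n + f (i - n))"
proof (induction n arbitrary: i)
  case (Suc n) thus ?case by (cases i) (auto simp: ext_def)
qed auto

lemma ren_lift_eq: "(\<And>i. f (liftf n k i) = g i) \<Longrightarrow> ren f (lift n k t) = ren g t"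
  unfolding lift_ren ren_ren by (rule ren_ext) (simp add: comp_def)

section \<open>Substitution spines\<close>

fun lsp :: "trm list \<Rightarrow> trm \<Rightarrow> trm" where
  "lsp [] X = X"
| "lsp (a # as) X = ES (lsp as X) a"

fun renL :: "(nat \<Rightarrow> nat) \<Rightarrow> trm list \<Rightarrow> trm list" where
  "renL f [] = []"
| "renL f (a # as) = ren f a # renL (ext f) as"

lemma length_renL[simp]: "length (renL f as) = length as"
  by (induction as arbitrary: f) auto

lemma ren_lsp: "ren f (lsp as X) = lsp (renL f as) (ren (extn (length as) f) X)"
  by (induction as arbitrary: f) (auto simp: extn_ext)

lemma Lval_lsp_E: "Lval u \<Longrightarrow> \<exists>as s. u = lsp as (Lam s)"
proof (induction u)
  case (Lam s) thus ?case by (intro exI[of _ "[]"]) auto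
next
  case (ES u1 u2)
  then obtain as s where "u1 = lsp as (Lam s)" by auto
  thus ?case by (intro exI[of _ "u2 # as"]) auto
qed auto

lemma Lval_lsp[simp]: "Lval (lsp as X) = Lval X"
  by (induction as) auto

lemma dbc_lsp: "dbc w (lsp as (Lam s)) = lsp as (ES s (lift 0 (length as) w))"
  by (induction as arbitrary: w) (auto simp: lift_lift)

lemma lsvc_lsp: "lsvc c a (lsp as (Lam s)) = lsp as (ES (hrep c (lift 0 1 (Lam s)) (lift 1 (length as) a)) (Lam s))"
  by (induction as arbitrary: a) (auto simp: lift_lift)

lemma streq_lsp: "streq c X Y \<Longrightarrow> streq c (lsp as X) (lsp as Y)"
  by (induction as) (auto intro: streq_ESL)

lemma SUBPULL: "streq c (ES T (lsp as X)) (lsp as (ES (lift 1 (length as) T) X))"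
proof (induction as arbitrary: T)
  case (Cons a bs)
  have "streq c (ES T (lsp (a # bs) X)) (ES (ES (lift 1 1 T) (lsp bs X)) a)"
    using eq_sub[of c T "lsp bs X" a] by (simp add: streq_sym)
  also have "streq c \<dots> (ES (lsp bs (ES (lift 1 (length bs) (lift 1 1 T)) X)) a)"
    by (rule streq_ESL, rule Cons.IH)
  also have "lift 1 (length bs) (lift 1 1 T) = lift 1 (length (a # bs)) T"
    using lift_lift[of 1 1 1 "length bs" T] by simp
  finally show ?case by simp
qed simp

lemma APPPUSH: "streq c (lsp as (App X (lift 0 (length as) b))) (App (lsp as X) b)"
proof (induction as arbitrary: b)
  case (Cons a bs)
  have e: "lift 0 (length (a # bs)) b = lift 0 (length bs) (lift 0 1 b)"
    using lift_lift[of 0 0 1 "length bs" b] by simp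
  have "streq c (lsp (a # bs) (App X (lift 0 (length (a # bs)) b))) (ES (App (lsp bs X) (lift 0 1 b)) a)"
    unfolding e by (simp, rule streq_ESL, rule Cons.IH)
  also have "streq c \<dots> (App (lsp (a # bs) X) b)" using eq_appl by simp
  finally show ?case .
qed simp

lemma APPDIST: "c \<noteq> Need \<Longrightarrow> streq c (lsp as (App P Q)) (App (lsp as P) (lsp as Q))"
proof (induction as)
  case (Cons a bs)
  have "streq c (lsp (a # bs) (App P Q)) (ES (App (lsp bs P) (lsp bs Q)) a)"
    using Cons by (simp add: streq_ESL)
  also have "streq c \<dots> (App (lsp (a # bs) P) (lsp (a # bs) Q))" using eq_app[OF Cons.prems] by simp
  finally show ?case .
qed simp

fun liftL :: "nat \<Rightarrow> trm list \<Rightarrow> trm list" where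
  "liftL k [] = []"
| "liftL k (a # as) = lift k 1 a # liftL (Suc k) as"

definition rotf :: "nat \<Rightarrow> nat \<Rightarrow> nat" where
  "rotf n i = (if i = 0 then n else if i \<le> n then i - 1 else i)"

lemma length_liftL[simp]: "length (liftL k as) = length as"
  by (induction as arbitrary: k) auto

lemma extn_swapf: "extn m (swapf c) = swapf (m + c)"
  by (induction m) (auto simp: ext_swapf)

lemma renL_swap_liftL: "renL (swapf k) (liftL k bs) = liftL (Suc k) bs"
proof (induction bs arbitrary: k)
  case (Cons b bs)
  have "ren (swapf k) (lift k 1 b) = lift (Suc k) 1 b"
    by (simp add: lift_ren, rule ren_ext, auto simp: swapf_def liftf_def)
  thus ?case using Cons by (simp add: ext_swapf)
qed simp

lemma COMPUSH: "streq c (lsp as (ES Y (lift 0 (length as) u))) (ES (lsp (liftL 0 as) (ren (rotf (length as)) Y)) u)"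
proof (induction as arbitrary: u Y)
  case Nil
  have "ren (rotf 0) Y = Y" by (rule trans[OF ren_ext ren_id(2)]) (simp add: rotf_def)
  thus ?case by simp
next
  case (Cons a bs)
  let ?m = "length bs"
  have e: "lift 0 (length (a # bs)) u = lift 0 ?m (lift 0 1 u)"
    using lift_lift[of 0 0 1 ?m u] by simp
  have "streq c (lsp (a # bs) (ES Y (lift 0 (length (a # bs)) u)))
     (ES (ES (lsp (liftL 0 bs) (ren (rotf ?m) Y)) (lift 0 1 u)) a)"
    unfolding e by (simp, rule streq_ESL, rule Cons.IH)
  also have "streq c \<dots> (ES (ES (swap 0 (lsp (liftL 0 bs) (ren (rotf ?m) Y))) (lift 0 1 a)) u)"
    by (rule eq_com)
  also have "swap 0 (lsp (liftL 0 bs) (ren (rotf ?m) Y)) = lsp (liftL 1 bs) (ren (rotf (Suc ?m)) Y)"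
  proof -
    have "ren (swapf ?m) (ren (rotf ?m) Y) = ren (rotf (Suc ?m)) Y"
      by (simp, rule ren_ext, auto simp: swapf_def rotf_def)
    thus ?thesis using renL_swap_liftL[of 0 bs] by (simp add: swap_ren ren_lsp extn_swapf)
  qed
  finally show ?case by simp
qed




lemma cren_cren[simp]: "cren f (cren g C) = cren (\<lambda>i. f (g i)) C"
proof (induction C arbitrary: f g)
  case (CESL C t) thus ?case by (simp add: ext_comp[symmetric] comp_def) (metis (no_types) ext_comp ren_ext)
qed (auto simp: ext_comp)

lemma cren_ext: "(\<And>i. f i = g i) \<Longrightarrow> cren f C = cren g C"
proof -
  assume "\<And>i. f i = g i" hence "f = g" by auto
  thus ?thesis by simp
qed

lemma cren_id[simp]: "cren (\<lambda>i. i) C = C"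
  by (induction C) (auto simp: ext_id)

definition copyf :: "nat \<Rightarrow> nat \<Rightarrow> nat" where
  "copyf k j = (if j = 0 then k else j - 1)"

lemma ext_app: "ext f i = (if i = 0 then 0 else Suc (f (i - 1)))"
  by (cases i) auto

lemma ren_id_ext: "(\<And>i. f i = i) \<Longrightarrow> ren f t = t"
  by (rule trans[OF ren_ext ren_id(2)]) auto

lemma m0_l01[simp]: "ren (mergef 0) (lift 0 (Suc 0) X) = X"
  by (simp add: lift_ren, rule ren_id_ext, simp add: mergef_app liftf_def)
lemma m1_l11[simp]: "ren (mergef (Suc 0)) (lift (Suc 0) (Suc 0) X) = X"
  by (simp add: lift_ren, rule ren_id_ext, simp add: mergef_app liftf_def)
lemma m0_l11[simp]: "ren (mergef 0) (lift (Suc 0) (Suc 0) X) = X"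
  by (simp add: lift_ren, rule ren_id_ext, simp add: mergef_app liftf_def)
lemma m1_l21[simp]: "ren (mergef (Suc 0)) (lift (Suc (Suc 0)) (Suc 0) X) = X"
  by (simp add: lift_ren, rule ren_id_ext, simp add: mergef_app liftf_def)

lemma ren_eqI: "(\<And>i. f i = g i) \<Longrightarrow> ren f t = ren g t" by (rule ren_ext)

lemma dup_fwd: "c \<noteq> Need \<Longrightarrow> ren (mergef 0) T' = T \<Longrightarrow> streq c (ES T w) (ES (ES T' (lift 0 1 w)) w)"
  by (rule eq_dup)

lemma COPY_gen:
  assumes cN: "c \<noteq> Need"
  shows "\<forall>f Z Z' w. ren (copyf (depth W)) Z' = Z \<longrightarrow>
     streq c (ES (plug (cren f W) Z) w) (ES (plug (cren f W) (ES Z' (lift 0 (Suc (depth W)) w))) w)"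
proof (induction W)
  case Hole
  show ?case
  proof (intro allI impI)
    fix f Z Z' w assume h: "ren (copyf (depth Hole)) Z' = Z"
    have "ren (mergef 0) Z' = Z" using h by (simp, metis (no_types, lifting) copyf_def mergef_app ren_ext le_zero_eq)
    thus "streq c (ES (plug (cren f Hole) Z) w) (ES (plug (cren f Hole) (ES Z' (lift 0 (Suc (depth Hole)) w))) w)"
      using eq_dup[OF cN] by simp
  qed
next
  case (CAppL W1 t)
  show ?case
  proof (intro allI impI)
    fix f Z Z' w assume h: "ren (copyf (depth (CAppL W1 t))) Z' = Z"
    let ?W = "cren f W1"
    have "streq c (ES (plug (cren f (CAppL W1 t)) Z) w) (App (ES (plug ?W Z) w) (ES (ren f t) w))"
      using eq_app[OF cN] by simp
    also have "streq c \<dots> (App (ES (plug ?W (ES Z' (lift 0 (Suc (depth W1)) w))) w) (ES (ren f t) w))"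
      using CAppL.IH h by (intro streq_AppL) auto
    also have "streq c \<dots> (ES (plug (cren f (CAppL W1 t)) (ES Z' (lift 0 (Suc (depth (CAppL W1 t))) w))) w)"
      using eq_app[OF cN] by (simp add: streq_sym)
    finally show "streq c (ES (plug (cren f (CAppL W1 t)) Z) w) (ES (plug (cren f (CAppL W1 t)) (ES Z' (lift 0 (Suc (depth (CAppL W1 t))) w))) w)" .
  qed
next
  case (CAppR t W1)
  show ?case
  proof (intro allI impI)
    fix f Z Z' w assume h: "ren (copyf (depth (CAppR t W1))) Z' = Z"
    let ?W = "cren f W1"
    have "streq c (ES (plug (cren f (CAppR t W1)) Z) w) (App (ES (ren f t) w) (ES (plug ?W Z) w))"
      using eq_app[OF cN] by simp
    also have "streq c \<dots> (App (ES (ren f t) w) (ES (plug ?W (ES Z' (lift 0 (Suc (depth W1)) w))) w))"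
      using CAppR.IH h by (intro streq_AppR) auto
    also have "streq c \<dots> (ES (plug (cren f (CAppR t W1)) (ES Z' (lift 0 (Suc (depth (CAppR t W1))) w))) w)"
      using eq_app[OF cN] by (simp add: streq_sym)
    finally show "streq c (ES (plug (cren f (CAppR t W1)) Z) w) (ES (plug (cren f (CAppR t W1)) (ES Z' (lift 0 (Suc (depth (CAppR t W1))) w))) w)" .
  qed
next
  case (CESL W1 t)
  show ?case
  proof (intro allI impI)
    fix f Z Z' w assume h: "ren (copyf (depth (CESL W1 t))) Z' = Z"
    define k where "k = depth W1"
    define h1 where "h1 = (\<lambda>i::nat. swapf 0 (liftf (Suc (Suc 0)) 1 i))"
    define g1 where "g1 = (\<lambda>i::nat. mergef 1 (swapf 0 i))"
    have gh: "g1 (h1 i) = i" for i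
      unfolding g1_def h1_def by (auto simp: swapf_def liftf_def mergef_app)
    let ?W = "cren (ext f) W1"
    let ?t = "ren f t"
    let ?P = "plug ?W Z"
    let ?Wh = "cren (\<lambda>i. h1 (ext f i)) W1"
    let ?Zh = "ren (extn k h1) Z"
    let ?Z2 = "ren (ext (extn k h1)) Z'"
    have sw: "swap 0 (lift (Suc (Suc 0)) 1 X) = ren h1 X" for X
      by (simp add: swap_ren lift_ren h1_def)
    have P2: "ren h1 ?P = plug ?Wh ?Zh" by (simp add: ren_plug k_def)
    have hZ2: "ren (copyf k) ?Z2 = ?Zh"
    proof -
      have "ren (copyf k) ?Z2 = ren (\<lambda>i. extn k h1 (copyf (Suc k) i)) Z'"
        by (simp, rule ren_ext, auto simp: copyf_def extn_app h1_def swapf_def liftf_def ext_app)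
      thus ?thesis using h[symmetric] by (simp add: k_def)
    qed
    have "streq c (ES (ES ?P ?t) w) (ES (ES (ES (lift (Suc (Suc 0)) 1 ?P) (lift 0 1 ?t)) (lift 0 1 w)) w)"
    proof (rule dup_fwd[OF cN])
      show "ren (mergef 0) (ES (lift (Suc (Suc 0)) 1 ?P) (lift 0 1 ?t)) = ES ?P ?t" by (simp add: ext_mergef)
    qed
    also have "streq c \<dots> (ES (ES (ES (swap 0 (lift (Suc (Suc 0)) 1 ?P)) (lift 0 1 (lift 0 1 w))) ?t) w)"
      by (rule streq_ESL, rule eq_com)
    also have "\<dots> = ES (ES (ES (plug ?Wh ?Zh) (lift 0 (Suc (Suc 0)) w)) ?t) w"
      using sw P2 lift_lift[of 0 0 1 1 w] by simp
    also have "streq c \<dots> (ES (ES (ES (plug ?Wh (ES ?Z2 (lift 0 (Suc k) (lift 0 (Suc (Suc 0)) w)))) (lift 0 (Suc (Suc 0)) w)) ?t) w)"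
    proof -
      have "streq c (ES (plug ?Wh ?Zh) (lift 0 (Suc (Suc 0)) w)) (ES (plug ?Wh (ES ?Z2 (lift 0 (Suc k) (lift 0 (Suc (Suc 0)) w)))) (lift 0 (Suc (Suc 0)) w))"
        using CESL.IH hZ2 unfolding k_def by blast
      thus ?thesis by (rule streq_ESL[OF streq_ESL])
    qed
    also have "\<dots> = ES (ES (ES (swap 0 (swap 0 (plug ?Wh (ES ?Z2 (lift 0 (Suc k) (lift 0 (Suc (Suc 0)) w)))))) (lift 0 1 (lift 0 1 w))) ?t) w"
      using lift_lift[of 0 0 1 1 w] by simp
    also have "streq c \<dots> (ES (ES (ES (swap 0 (plug ?Wh (ES ?Z2 (lift 0 (Suc k) (lift 0 (Suc (Suc 0)) w))))) (lift 0 1 ?t)) (lift 0 1 w)) w)"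
      by (rule streq_ESL, rule streq_sym, rule eq_com)
    also have "streq c \<dots> (ES (ren (mergef 0) (ES (swap 0 (plug ?Wh (ES ?Z2 (lift 0 (Suc k) (lift 0 (Suc (Suc 0)) w))))) (lift 0 1 ?t))) w)"
      by (rule streq_sym, rule dup_fwd[OF cN refl])
    also have "ren (mergef 0) (ES (swap 0 (plug ?Wh (ES ?Z2 (lift 0 (Suc k) (lift 0 (Suc (Suc 0)) w))))) (lift 0 1 ?t))
       = ES (plug ?W (ES Z' (lift 0 (Suc (Suc k)) w))) ?t"
    proof -
      have 1: "ren (mergef 0) (lift 0 1 ?t) = ?t" by simp
      have 2: "ren (mergef 1) (swap 0 X) = ren g1 X" for X by (simp add: swap_ren g1_def)
      have 3: "cren (\<lambda>i. g1 (h1 (ext f i))) W1 = ?W" using gh by simp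
      have 4: "ren (ext (extn k g1)) ?Z2 = Z'"
        by (simp, rule trans[OF ren_ext ren_id(2)], auto simp: extn_app gh ext_app)
      have 5: "ren (extn k g1) (lift 0 (Suc k) (lift 0 (Suc (Suc 0)) w)) = lift 0 (Suc (Suc k)) w"
        by (simp add: lift_ren, rule ren_ext, auto simp: extn_app g1_def liftf_def swapf_def mergef_app)
      show ?thesis using 1 2 3 4 5 by (simp add: ext_mergef ren_plug k_def)
    qed
    finally show "streq c (ES (plug (cren f (CESL W1 t)) Z) w) (ES (plug (cren f (CESL W1 t)) (ES Z' (lift 0 (Suc (depth (CESL W1 t))) w))) w)"
      by (simp add: k_def)
  qed
next
  case (CESR t W1)
  show ?case
  proof (intro allI impI)
    fix f Z Z' w assume h: "ren (copyf (depth (CESR t W1))) Z' = Z"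
    define k where "k = depth W1"
    let ?W = "cren f W1"
    let ?t = "ren (ext f) t"
    let ?A = "plug ?W Z"
    let ?Wl = "cren (\<lambda>i. liftf 1 1 (f i)) W1"
    let ?Zl = "ren (extn k (liftf 1 1)) Z"
    let ?Z2 = "ren (ext (extn k (liftf 1 1))) Z'"
    have A2: "lift 1 1 ?A = plug ?Wl ?Zl" by (simp add: lift_ren ren_plug k_def)
    have hZ2: "ren (copyf k) ?Z2 = ?Zl"
    proof -
      have "ren (copyf k) ?Z2 = ren (\<lambda>i. extn k (liftf 1 1) (copyf k i)) Z'"
        by (simp, rule ren_ext, auto simp: copyf_def extn_app liftf_def ext_app)
      thus ?thesis using h[symmetric] by (simp add: k_def)
    qed
    have "streq c (ES (ES ?t ?A) w) (ES (ES (ES (lift 1 1 ?t) (lift 1 1 ?A)) (lift 0 1 w)) w)"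
      by (rule dup_fwd[OF cN]) (simp add: ext_mergef)
    also have "streq c \<dots> (ES (ES ?t (ES (lift 1 1 ?A) (lift 0 1 w))) w)"
      by (rule streq_ESL, rule eq_sub)
    also have "streq c \<dots> (ES (ES ?t (ES (plug ?Wl (ES ?Z2 (lift 0 (Suc k) (lift 0 1 w)))) (lift 0 1 w))) w)"
    proof -
      have "streq c (ES (plug ?Wl ?Zl) (lift 0 1 w)) (ES (plug ?Wl (ES ?Z2 (lift 0 (Suc k) (lift 0 1 w)))) (lift 0 1 w))"
        using CESR.IH hZ2 unfolding k_def by blast
      thus ?thesis using A2 by (simp add: streq_ESL streq_ESR)
    qed
    also have "streq c \<dots> (ES (ES (ES (lift 1 1 ?t) (plug ?Wl (ES ?Z2 (lift 0 (Suc k) (lift 0 1 w))))) (lift 0 1 w)) w)"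
      by (rule streq_ESL, rule streq_sym, rule eq_sub)
    also have "streq c \<dots> (ES (ren (mergef 0) (ES (lift 1 1 ?t) (plug ?Wl (ES ?Z2 (lift 0 (Suc k) (lift 0 1 w)))))) w)"
      by (rule streq_sym, rule dup_fwd[OF cN refl])
    also have "ren (mergef 0) (ES (lift 1 1 ?t) (plug ?Wl (ES ?Z2 (lift 0 (Suc k) (lift 0 1 w)))))
       = ES ?t (plug ?W (ES Z' (lift 0 (Suc k) w)))"
    proof -
      have 3: "cren (\<lambda>i. mergef 0 (liftf 1 1 (f i))) W1 = ?W"
        by (rule trans[OF cren_ext], simp_all add: mergef_app liftf_def)
      have 4: "ren (ext (extn k (mergef 0))) ?Z2 = Z'"
        by (simp, rule trans[OF ren_ext ren_id(2)], auto simp: extn_app ext_app mergef_app liftf_def)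
      have 5: "ren (extn k (mergef 0)) (lift 0 (Suc k) (lift 0 1 w)) = lift 0 (Suc k) w"
        by (simp add: lift_ren, rule ren_ext, auto simp: extn_app liftf_def mergef_app)
      show ?thesis using 3 4 5 by (simp add: ext_mergef ren_plug k_def)
    qed
    finally show "streq c (ES (plug (cren f (CESR t W1)) Z) w) (ES (plug (cren f (CESR t W1)) (ES Z' (lift 0 (Suc (depth (CESR t W1))) w))) w)"
      by (simp add: k_def)
  qed
qed

lemma COPY:
  assumes "c \<noteq> Need" "ren (copyf (depth W)) Z' = Z"
  shows "streq c (ES (plug W Z) w) (ES (plug W (ES Z' (lift 0 (Suc (depth W)) w))) w)"
  using COPY_gen[OF assms(1), of W] assms(2) cren_id[of W] by metis

section \<open>Copying a whole substitution spine\<close>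

fun lctx :: "trm list \<Rightarrow> ctx" where
  "lctx [] = Hole"
| "lctx (a # as) = CESL (lctx as) a"

lemma plug_lctx[simp]: "plug (lctx as) X = lsp as X"
  by (induction as) auto
lemma depth_lctx[simp]: "depth (lctx as) = length as"
  by (induction as) auto

fun ccomp :: "ctx \<Rightarrow> ctx \<Rightarrow> ctx" where
  "ccomp Hole D = D"
| "ccomp (CAppL C t) D = CAppL (ccomp C D) t"
| "ccomp (CAppR t C) D = CAppR t (ccomp C D)"
| "ccomp (CESL C t) D = CESL (ccomp C D) t"
| "ccomp (CESR t C) D = CESR t (ccomp C D)"

lemma plug_ccomp[simp]: "plug (ccomp C D) X = plug C (plug D X)"
  by (induction C) auto
lemma depth_ccomp[simp]: "depth (ccomp C D) = depth C + depth D"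
  by (induction C) auto

fun cpL0 :: "nat \<Rightarrow> nat \<Rightarrow> nat \<Rightarrow> trm list \<Rightarrow> trm list" where
  "cpL0 k n i [] = []"
| "cpL0 k n i (a # as) = lift i (k + n) a # cpL0 k n (Suc i) as"

definition cpf :: "nat \<Rightarrow> nat \<Rightarrow> nat \<Rightarrow> nat" where
  "cpf k n j = (if j < k then j + n else if j < k + n then j - k else j + n)"

lemma length_cpL0[simp]: "length (cpL0 k n i as) = length as"
  by (induction as arbitrary: i) auto

lemma extn_Suc_app: "extn i f j = (if j < i then j else i + f (j - i))" by (rule extn_app)

lemma renL_redir: "renL (extn i (\<lambda>j. if j = m + k then 0 else Suc j)) (cpL0 k m i bs) = cpL0 k (Suc m) (Suc i) bs"
proof (induction bs arbitrary: i)
  case (Cons b bs)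
  have "ren (extn i (\<lambda>j. if j = m + k then 0 else Suc j)) (lift i (k + m) b) = lift (Suc i) (k + Suc m) b"
    by (simp add: lift_ren, rule ren_ext, auto simp: extn_app liftf_def)
  moreover have "ext (extn i (\<lambda>j. if j = m + k then 0 else Suc j)) = extn (Suc i) (\<lambda>j. if j = m + k then 0 else Suc j)"
    by simp
  ultimately show ?case using Cons.IH[of "Suc i"] by (simp del: extn.simps)
qed simp

lemma CL:
  assumes cN: "c \<noteq> Need"
  shows "streq c (lsp as (plug W Z)) (lsp as (plug W (lsp (cpL0 (depth W) (length as) 0 as) (ren (cpf (depth W) (length as)) Z))))"
proof (induction as arbitrary: W Z)
  case Nil
  have "ren (cpf (depth W) 0) Z = Z" by (rule ren_id_ext) (simp add: cpf_def)
  thus ?case by simp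
next
  case (Cons a bs)
  define k where "k = depth W"
  define m where "m = length bs"
  define redir where "redir = (\<lambda>j::nat. if j = m + k then 0 else Suc j)"
  define Z2 where "Z2 = lsp (cpL0 k m 0 bs) (ren (cpf k m) Z)"
  have "streq c (lsp (a # bs) (plug W Z)) (ES (lsp bs (plug W Z2)) a)"
    using Cons.IH[of W Z] unfolding Z2_def k_def m_def by (simp add: streq_ESL)
  also have "\<dots> = ES (plug (ccomp (lctx bs) W) Z2) a" by simp
  also have "streq c \<dots> (ES (plug (ccomp (lctx bs) W) (ES (ren redir Z2) (lift 0 (Suc (depth (ccomp (lctx bs) W))) a))) a)"
  proof (rule COPY[OF cN])
    show "ren (copyf (depth (ccomp (lctx bs) W))) (ren redir Z2) = Z2"
      by (simp, rule ren_id_ext, simp add: copyf_def redir_def m_def k_def)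
  qed
  also have "ES (ren redir Z2) (lift 0 (Suc (depth (ccomp (lctx bs) W))) a)
     = lsp (cpL0 k (length (a # bs)) 0 (a # bs)) (ren (cpf k (length (a # bs))) Z)"
  proof -
    have 1: "renL redir (cpL0 k m 0 bs) = cpL0 k (Suc m) (Suc 0) bs"
      using renL_redir[of 0 m k bs] unfolding redir_def by simp
    have 2: "ren (extn m redir) (ren (cpf k m) Z) = ren (cpf k (Suc m)) Z"
      by (simp, rule ren_ext, auto simp: extn_app cpf_def redir_def)
    show ?thesis using 1 2 unfolding Z2_def by (simp add: ren_lsp m_def k_def add.commute)
  qed
  finally show ?case by (simp add: k_def)
qed

lemma LSUB:
  assumes cN: "c \<noteq> Need"
  shows "streq c (lsp as (ES Y X)) (lsp as (ES Y (lift 0 (length as) (lsp as X))))"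
proof -
  have "streq c (lsp as (plug (CESR Y Hole) X)) (lsp as (plug (CESR Y Hole) (lsp (cpL0 0 (length as) 0 as) (ren (cpf 0 (length as)) X))))"
    using CL[OF cN, of as "CESR Y Hole" X] by simp
  moreover have "lift 0 (length as) (lsp as X) = lsp (cpL0 0 (length as) 0 as) (ren (cpf 0 (length as)) X)"
  proof -
    have r: "renL (extn i (liftf 0 n)) bs = cpL0 0 n i bs" for i n bs
    proof (induction bs arbitrary: i)
      case (Cons b bs)
      have "ren (extn i (liftf 0 n)) b = lift i n b"
        by (simp add: lift_ren, rule ren_ext, auto simp: extn_app liftf_def)
      thus ?case using Cons.IH[of "Suc i"] by simp
    qed simp
    have "ren (extn (length as) (liftf 0 (length as))) X = ren (cpf 0 (length as)) X"
      by (rule ren_ext, auto simp: extn_app liftf_def cpf_def)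
    thus ?thesis using r[of 0 "length as" as] by (simp add: lift_ren ren_lsp)
  qed
  ultimately show ?thesis by simp
qed




lemma lift_Suc0_lsp: "lift 0 (Suc 0) (lsp as X) = lsp (renL (liftf 0 1) as) (lift (length as) 1 X)"
proof -
  have "extn (length as) (liftf 0 1) = liftf (length as) 1"
    by (rule ext, simp add: extn_app liftf_def)
  thus ?thesis by (simp add: lift_ren ren_lsp)
qed

lemma goleft_lift: "goleft c (lift n k a) (lift n k b) = goleft c a b"
  by (simp add: lift_ren)

lemma EQ_appl:
  assumes "hv Need a = Some 0" "Lval w"
  shows "streq Need (lsvc Need (App a (lift 0 1 b)) w) (App (lsvc Need a w) b)"
proof -
  obtain as s where w: "w = lsp as (Lam s)" using Lval_lsp_E assms(2) by blast
  define n where "n = length as"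
  have e: "lift 1 n (lift 0 1 b) = lift 0 1 (lift 0 n b)"
    using lift_lift[of 0 0 1 n b] lift_lift[of 0 0 n 1 b] lift_lift[of 0 1 1 n b] by simp
  have "lsvc Need (App a (lift 0 1 b)) w = lsp as (ES (App (hrep Need (lift 0 1 (Lam s)) (lift 1 n a)) (lift 0 1 (lift 0 n b))) (Lam s))"
    using w e by (simp add: lsvc_lsp n_def)
  also have "streq Need \<dots> (lsp as (App (ES (hrep Need (lift 0 1 (Lam s)) (lift 1 n a)) (Lam s)) (lift 0 n b)))"
    by (rule streq_lsp, rule eq_appl)
  also have "streq Need \<dots> (App (lsp as (ES (hrep Need (lift 0 1 (Lam s)) (lift 1 n a)) (Lam s))) b)"
    unfolding n_def by (rule APPPUSH)
  also have "\<dots> = App (lsvc Need a w) b" using w by (simp add: lsvc_lsp n_def)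
  finally show ?thesis .
qed

lemma EQ_applsv:
  assumes cN: "c \<noteq> Need" and "Lval w"
  shows "streq c (lsvc c (App a b) w) (if goleft c a b then App (lsvc c a w) (ES b w) else App (ES a w) (lsvc c b w))"
proof -
  obtain as s where w: "w = lsp as (Lam s)" using Lval_lsp_E assms(2) by blast
  define n where "n = length as"
  define v1 where "v1 = lift 0 1 (Lam s)"
  have sb: "streq c (lsp as (ES (lift 1 n X) (Lam s))) (ES X w)" for X
    using SUBPULL[of c X as "Lam s"] w by (simp add: streq_sym n_def)
  show ?thesis
  proof (cases "goleft c a b")
    case True
    have "lsvc c (App a b) w = lsp as (ES (App (hrep c v1 (lift 1 n a)) (lift 1 n b)) (Lam s))"
      using w True by (simp add: lsvc_lsp n_def v1_def goleft_lift)
    also have "streq c \<dots> (lsp as (App (ES (hrep c v1 (lift 1 n a)) (Lam s)) (ES (lift 1 n b) (Lam s))))"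
      by (rule streq_lsp, rule eq_app[OF cN])
    also have "streq c \<dots> (App (lsp as (ES (hrep c v1 (lift 1 n a)) (Lam s))) (lsp as (ES (lift 1 n b) (Lam s))))"
      by (rule APPDIST[OF cN])
    also have "streq c \<dots> (App (lsvc c a w) (ES b w))"
      using w sb by (simp add: lsvc_lsp n_def v1_def streq_AppR)
    finally show ?thesis using True by simp
  next
    case False
    have "lsvc c (App a b) w = lsp as (ES (App (lift 1 n a) (hrep c v1 (lift 1 n b))) (Lam s))"
      using w False by (simp add: lsvc_lsp n_def v1_def goleft_lift)
    also have "streq c \<dots> (lsp as (App (ES (lift 1 n a) (Lam s)) (ES (hrep c v1 (lift 1 n b)) (Lam s))))"
      by (rule streq_lsp, rule eq_app[OF cN])
    also have "streq c \<dots> (App (lsp as (ES (lift 1 n a) (Lam s))) (lsp as (ES (hrep c v1 (lift 1 n b)) (Lam s))))"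
      by (rule APPDIST[OF cN])
    also have "streq c \<dots> (App (ES a w) (lsvc c b w))"
      using w sb by (simp add: lsvc_lsp n_def v1_def streq_AppL)
    finally show ?thesis using False by simp
  qed
qed

lemma EQ_dBcopy:
  assumes cN: "c \<noteq> Need" and "Lval a"
  shows "streq c (ES (dbc b a) w) (dbc (ES b w) (ES a w))"
proof -
  obtain as s where a: "a = lsp as (Lam s)" using Lval_lsp_E assms(2) by blast
  define n where "n = length as"
  define W where "W = ccomp (lctx as) (CESR s Hole)"
  have dW: "depth W = n" by (simp add: W_def n_def)
  have "ES (dbc b a) w = ES (plug W (lift 0 n b)) w" using a by (simp add: dbc_lsp W_def n_def)
  also have "streq c \<dots> (ES (plug W (ES (lift 1 (Suc n) b) (lift 0 (Suc (depth W)) w))) w)"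
  proof (rule COPY[OF cN])
    show "ren (copyf (depth W)) (lift 1 (Suc n) b) = lift 0 n b"
      by (simp add: dW lift_ren, rule ren_ext, simp add: copyf_def liftf_def)
  qed
  also have "\<dots> = dbc (ES b w) (ES a w)"
  proof -
    have "lift 0 n (lift 0 (Suc 0) (ES b w)) = ES (lift 1 (Suc n) b) (lift 0 (Suc n) w)"
      by (simp add: lift_ren, intro conjI; rule ren_ext; simp add: liftf_def ext_app)
    thus ?thesis using a by (simp add: dbc_lsp W_def n_def dW)
  qed
  finally show ?thesis .
qed


lemma liftL_renL: "liftL k as = renL (liftf k 1) as"
proof (induction as arbitrary: k)
  case (Cons a as) thus ?case by (simp add: lift_ren ext_liftf)
qed simp

lemma EQ_com:
  assumes "hv c a = Some 1" "Lval w"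
  shows "streq c (lsvc c (ES a (lift 0 1 u1)) w) (ES (lsvc c (swap 0 a) (lift 0 1 w)) u1)"
proof -
  obtain as s where w: "w = lsp as (Lam s)" using Lval_lsp_E assms(2) by blast
  define n where "n = length as"
  define v where "v = Lam s"
  define H where "H = hrep c (lift 0 1 (lift 0 1 v)) (lift (Suc (Suc 0)) n a)"
  have hv2: "hv c (lift (Suc (Suc 0)) n a) \<noteq> Some 0" using assms(1) by (simp add: hv_lift liftf_def)
  have e1: "lift 1 n (lift 0 1 u1) = lift 0 1 (lift 0 n u1)"
    by (simp add: lift_ren, rule ren_ext, simp add: liftf_def)
  have "lsvc c (ES a (lift 0 1 u1)) w = lsp as (ES (ES H (lift 0 1 (lift 0 n u1))) v)"
    using w hv2 e1 by (simp add: lsvc_lsp n_def v_def H_def)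
  also have "streq c \<dots> (lsp as (ES (ES (swap 0 H) (lift 0 1 v)) (lift 0 n u1)))"
    by (rule streq_lsp, rule eq_com)
  also have "streq c \<dots> (ES (lsp (liftL 0 as) (ren (rotf n) (ES (swap 0 H) (lift 0 1 v)))) u1)"
    unfolding n_def by (rule COMPUSH)
  also have "\<dots> = ES (lsvc c (swap 0 a) (lift 0 1 w)) u1"
  proof -
    have r1: "ren (rotf n) (lift 0 1 v) = lift n 1 v"
      by (simp add: lift_ren, rule ren_ext, simp add: rotf_def liftf_def)
    have r2: "ren (ext (rotf n)) (swap 0 H) = hrep c (lift 0 1 (lift n 1 v)) (lift 1 n (swap 0 a))"
    proof -
      have "ren (ext (rotf n)) (swap 0 H) = hrep c (ren (\<lambda>i. ext (rotf n) (swapf 0 i)) (lift 0 1 (lift 0 1 v)))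
              (ren (\<lambda>i. ext (rotf n) (swapf 0 i)) (lift (Suc (Suc 0)) n a))"
        by (simp add: H_def swap_ren hrep_ren[symmetric])
      moreover have "ren (\<lambda>i. ext (rotf n) (swapf 0 i)) (lift 0 1 (lift 0 1 v)) = lift 0 1 (lift n 1 v)"
        by (simp add: lift_ren, rule ren_ext, simp add: rotf_def liftf_def swapf_def)
      moreover have "ren (\<lambda>i. ext (rotf n) (swapf 0 i)) (lift (Suc (Suc 0)) n a) = lift 1 n (swap 0 a)"
        by (simp add: lift_ren swap_ren, rule ren_ext, auto simp: rotf_def liftf_def swapf_def ext_app)
      ultimately show ?thesis by simp
    qed
    have "lift 0 1 w = lsp (liftL 0 as) (lift n 1 v)"
      using lift_Suc0_lsp[of as "Lam s"] w by (simp add: liftL_renL n_def v_def)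
    thus ?thesis using r1 r2 by (simp add: lsvc_lsp n_def v_def)
  qed
  finally show ?thesis .
qed


lemma lsvc_lsp': "lsvc c a (lsp as (Lam s)) = lsp as (ES (hrep c (lift 0 (Suc 0) (Lam s)) (lift (Suc 0) (length as) a)) (Lam s))"
  using lsvc_lsp by simp

lemma lift_n1_Lam: "\<exists>s'. lift n 1 (Lam s) = Lam s'" by simp

lemma EQ_dupkept:
  assumes cN: "c \<noteq> Need" and h2: "hv c a2 = Some 0" and Lw: "Lval w" and aa: "a = ren (mergef 0) a2"
  shows "streq c (lsvc c a w) (ES (lsvc c a2 (lift 0 1 w)) w)"
proof -
  obtain as s where w: "w = lsp as (Lam s)" using Lval_lsp_E Lw by blast
  define n where "n = length as"
  define v where "v = Lam s"
  define as1 where "as1 = renL (liftf 0 1) as"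
  define v' where "v' = lift n 1 v"
  define H2 where "H2 = hrep c (lift 0 1 v') (lift 1 n a2)"
  define R where "R = (\<lambda>j::nat. if j = n then 0 else Suc j)"
  define R' where "R' = (\<lambda>j::nat. if j = n then 0 else if j < n then Suc j else j)"
  define Z where "Z = ES H2 v'"
  define Z3 where "Z3 = ren R' Z"
  have lw: "lift 0 1 w = lsp as1 v'" using lift_Suc0_lsp[of as "Lam s"] w by (simp add: as1_def v'_def v_def n_def)
  have la1: "length as1 = n" by (simp add: as1_def n_def)
  have u': "ES (lsvc c a2 (lift 0 1 w)) w = ES (plug (lctx as1) Z) w"
    using lw la1 by (simp add: v'_def v_def lsvc_lsp' Z_def H2_def)
  also have "streq c \<dots> (ES (plug (lctx as1) (ES (ren R Z) (lift 0 (Suc (depth (lctx as1))) w))) w)"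
  proof (rule COPY[OF cN])
    show "ren (copyf (depth (lctx as1))) (ren R Z) = Z"
      by (simp add: la1, rule ren_id_ext, simp add: copyf_def R_def)
  qed
  also have "\<dots> = ES (lift 0 1 (lsp as (ES Z3 (lift 0 n w)))) w"
  proof -
    have "lift (Suc n) 1 Z3 = ren R Z"
      by (simp add: Z3_def lift_ren, rule ren_ext, simp add: R_def R'_def liftf_def)
    moreover have "lift n 1 (lift 0 n w) = lift 0 (Suc n) w"
      by (simp add: lift_ren, rule ren_ext, simp add: liftf_def)
    ultimately show ?thesis using lift_Suc0_lsp[of as "ES Z3 (lift 0 n w)"] la1
      by (simp add: as1_def n_def)
  qed
  also have "streq c \<dots> (lsp as (ES Z3 (lift 0 n w)))" by (rule eq_gc[OF cN])
  also have "streq c \<dots> (lsp as (ES Z3 v))"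
    using LSUB[OF cN, of as Z3 v] w by (simp add: n_def v_def streq_sym)
  also have "lsp as (ES Z3 v) = lsp as (ES (ES (ren (ext R') H2) (lift 0 1 v)) v)"
  proof -
    have "ren R' v' = lift 0 1 v"
      by (simp add: v'_def lift_ren, rule ren_ext, simp add: R'_def liftf_def)
    thus ?thesis by (simp add: Z3_def Z_def)
  qed
  also have "streq c \<dots> (lsp as (ES (ren (mergef 0) (ren (ext R') H2)) v))"
    by (rule streq_lsp, rule streq_sym, rule eq_dup[OF cN refl])
  also have "ren (mergef 0) (ren (ext R') H2) = hrep c (lift 0 1 v) (lift 1 n a)"
  proof -
    have "ren (mergef 0) (ren (ext R') H2) = hrep c (ren (\<lambda>i. mergef 0 (ext R' i)) (lift 0 1 v')) (ren (\<lambda>i. mergef 0 (ext R' i)) (lift 1 n a2))"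
      by (simp add: H2_def hrep_ren[symmetric])
    moreover have "ren (\<lambda>i. mergef 0 (ext R' i)) (lift 0 1 v') = lift 0 1 v"
      by (simp add: v'_def lift_ren, rule ren_ext, simp add: R'_def liftf_def mergef_app)
    moreover have "ren (\<lambda>i. mergef 0 (ext R' i)) (lift 1 n a2) = lift 1 n a"
      by (simp add: aa lift_ren, rule ren_ext, auto simp: R'_def liftf_def mergef_app ext_app)
    ultimately show ?thesis by simp
  qed
  also have "lsp as (ES (hrep c (lift 0 1 v) (lift 1 n a)) v) = lsvc c a w"
    using w by (simp add: lsvc_lsp' n_def v_def)
  finally show ?thesis by (rule streq_sym)
qed

lemma EQ_duprenamed:
  assumes cN: "c \<noteq> Need" and h2: "hv c a2 = Some 1" and Lw: "Lval w" and aa: "a = ren (mergef 0) a2"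
  shows "streq c (lsvc c a w) (lsvc c (ES a2 (lift 0 1 w)) w)"
proof -
  obtain as s where w: "w = lsp as (Lam s)" using Lval_lsp_E Lw by blast
  define n where "n = length as"
  define v where "v = Lam s"
  define H where "H = hrep c (lift 0 1 (lift 0 1 v)) (lift (Suc (Suc 0)) n a2)"
  have hv2: "hv c (lift (Suc (Suc 0)) n a2) \<noteq> Some 0" using h2 by (simp add: hv_lift liftf_def)
  have e1: "lift 1 n (lift 0 1 w) = lift 0 1 (lift 0 n w)"
    by (simp add: lift_ren, rule ren_ext, simp add: liftf_def)
  have "lsvc c (ES a2 (lift 0 1 w)) w = lsp as (ES (ES H (lift 0 1 (lift 0 n w))) v)"
    using w hv2 e1 by (simp add: lsvc_lsp' n_def v_def H_def)
  also have "streq c \<dots> (lsp as (ES (ES (swap 0 H) (lift 0 1 v)) (lift 0 n w)))"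
    by (rule streq_lsp, rule eq_com)
  also have "streq c \<dots> (lsp as (ES (ES (swap 0 H) (lift 0 1 v)) v))"
    using LSUB[OF cN, of as "ES (swap 0 H) (lift 0 1 v)" v] w by (simp add: n_def v_def streq_sym)
  also have "streq c \<dots> (lsp as (ES (ren (mergef 0) (swap 0 H)) v))"
    by (rule streq_lsp, rule streq_sym, rule eq_dup[OF cN refl])
  also have "ren (mergef 0) (swap 0 H) = hrep c (lift 0 1 v) (lift 1 n a)"
  proof -
    have "ren (mergef 0) (swap 0 H) = hrep c (ren (\<lambda>i. mergef 0 (swapf 0 i)) (lift 0 1 (lift 0 1 v))) (ren (\<lambda>i. mergef 0 (swapf 0 i)) (lift (Suc (Suc 0)) n a2))"
      by (simp add: H_def swap_ren hrep_ren[symmetric])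
    moreover have "ren (\<lambda>i. mergef 0 (swapf 0 i)) (lift 0 1 (lift 0 1 v)) = lift 0 1 v"
      by (simp add: lift_ren, rule ren_ext, simp add: swapf_def liftf_def mergef_app)
    moreover have "ren (\<lambda>i. mergef 0 (swapf 0 i)) (lift (Suc (Suc 0)) n a2) = lift 1 n a"
      by (simp add: aa lift_ren, rule ren_ext, auto simp: swapf_def liftf_def mergef_app)
    ultimately show ?thesis by simp
  qed
  also have "lsp as (ES (hrep c (lift 0 1 v) (lift 1 n a)) v) = lsvc c a w"
    using w by (simp add: lsvc_lsp' n_def v_def)
  finally show ?thesis by (rule streq_sym)
qed

lemma EQ_Needsub:
  assumes "hv Need a = Some 0" "Lval w"
  shows "streq Need (lsvc Need (ES (lift 1 1 a) u1) w) (ES a (lsvc Need u1 w))"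
proof -
  obtain as s where w: "w = lsp as (Lam s)" using Lval_lsp_E assms(2) by blast
  define n where "n = length as"
  define v where "v = Lam s"
  define U where "U = hrep Need (lift 0 1 v) (lift 1 n u1)"
  have hv2: "hv Need (lift (Suc (Suc 0)) n (lift 1 1 a)) = Some 0" using assms(1) by (simp add: hv_lift liftf_def)
  have e: "lift (Suc (Suc 0)) n (lift 1 1 a) = lift 1 1 (lift 1 n a)"
    by (simp add: lift_ren, rule ren_ext, simp add: liftf_def)
  have "lsvc Need (ES (lift 1 1 a) u1) w = lsp as (ES (ES (lift 1 1 (lift 1 n a)) U) v)"
    using w hv2 e by (simp add: lsvc_lsp' n_def v_def U_def)
  also have "streq Need \<dots> (lsp as (ES (lift 1 n a) (ES U v)))"
    by (rule streq_lsp, rule eq_sub)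
  also have "streq Need \<dots> (ES a (lsp as (ES U v)))"
    using SUBPULL[of Need a as "ES U v"] by (simp add: n_def streq_sym)
  also have "lsp as (ES U v) = lsvc Need u1 w" using w by (simp add: lsvc_lsp' n_def v_def U_def)
  finally show ?thesis .
qed

lemma EQ_Namesub:
  assumes "hv Name a = Some 0"
  shows "streq Name (ES (ES (hrep Name (lift 0 1 u1) (lift 1 1 a)) u1) w) (ES (hrep Name (lift 0 1 (ES u1 w)) a) (ES u1 w))"
proof -
  have "hv Name (lift 1 1 a) = Some 0" using assms by (simp add: hv_lift liftf_def)
  then obtain C where C: "is_H C" "lift 1 1 a = plug C (Var (depth C + 0))" using hv_E[of Name] by fastforce
  define d where "d = depth C"
  have hr: "hrep Name X (lift 1 1 a) = plug C (lift 0 d X)" for X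
    using hv_plug_H[OF C(1), of 0 X] C(2) by (simp add: d_def)
  have "ES (ES (hrep Name (lift 0 1 u1) (lift 1 1 a)) u1) w = ES (plug (CESL C u1) (lift 0 (Suc d) u1)) w"
    using hr lift_lift[of 0 0 1 d u1] by simp
  also have "streq Name \<dots> (ES (plug (CESL C u1) (ES (lift 1 (Suc (Suc d)) u1) (lift 0 (Suc (depth (CESL C u1))) w))) w)"
  proof (rule COPY)
    show "ren (copyf (depth (CESL C u1))) (lift 1 (Suc (Suc d)) u1) = lift 0 (Suc d) u1"
      by (simp add: d_def lift_ren, rule ren_ext, simp add: copyf_def liftf_def)
  qed simp
  also have "\<dots> = ES (ES (lift 1 1 (hrep Name (lift 0 1 (ES u1 w)) a)) u1) w"
  proof -
    have "lift 1 1 (hrep Name (lift 0 1 (ES u1 w)) a) = plug C (lift 0 d (lift 1 1 (lift 0 1 (ES u1 w))))"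
      using hrep_lift[of Name 1 1 "lift 0 1 (ES u1 w)" a] hr by simp
    moreover have "lift 0 d (lift 1 1 (lift 0 1 (ES u1 w))) = ES (lift 1 (Suc (Suc d)) u1) (lift 0 (Suc (Suc d)) w)"
      by (simp add: lift_ren, intro conjI; rule ren_ext; simp add: liftf_def ext_app)
    ultimately show ?thesis by (simp add: d_def)
  qed
  also have "streq Name \<dots> (ES (hrep Name (lift 0 1 (ES u1 w)) a) (ES u1 w))" by (rule eq_sub)
  finally show ?thesis .
qed




section \<open>Root cases: gc and dup\<close>

lemma rd_lift01: "rd c x a a' \<Longrightarrow> rd c x (lift 0 (Suc 0) a) (lift 0 (Suc 0) a')"
  by (simp add: lift_ren rd_ren)

lemma rd_lift_inv: "rd c x (lift n k a) b \<Longrightarrow> \<exists>a'. b = lift n k a' \<and> rd c x a a'"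
  by (simp add: lift_ren rd_ren_inv)

lemma ROOT_gc_F:
  assumes cN: "c \<noteq> Need" and r: "rd c x (ES (lift 0 1 a) w) t'"
  shows "\<exists>u'. rd c x a u' \<and> streq c t' u'"
  using r
proof cases
  case r_ls thus ?thesis using hv_lift01_ne0 by simp
next
  case r_lsv thus ?thesis using hv_lift01_ne0 by simp
next
  case (r_esl a0)
  then obtain a' where "a0 = lift 0 1 a'" "rd c x a a'" using rd_lift_inv by blast
  thus ?thesis using r_esl eq_gc[OF cN] by auto
next
  case r_esr thus ?thesis using cN by simp
qed

lemma ROOT_gc_B:
  assumes cN: "c \<noteq> Need" and r: "rd c x a t'"
  shows "\<exists>u'. rd c x (ES (lift 0 1 a) w) u' \<and> streq c t' u'"
proof -
  have "rd c x (ES (lift 0 1 a) w) (ES (lift 0 1 t') w)" using rd_lift01[OF r] by (simp add: rd.r_esl)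
  thus ?thesis using eq_gc[OF cN, of t' w] streq_sym by blast
qed

lemma hv_merge: "ren (mergef 0) a2 = a \<Longrightarrow> (hv c a = Some 0 \<longleftrightarrow> hv c a2 = Some 0 \<or> hv c a2 = Some 1)"
  by (auto simp: hv_ren mergef_app split: if_splits)

lemma merge_hrep: "ren (mergef 0) a2 = a \<Longrightarrow>
   ren (mergef 0) (hrep c (lift 0 (Suc 0) (lift 0 (Suc 0) w)) a2) = hrep c (lift 0 (Suc 0) w) a"
  using hrep_ren[of c "mergef 0" "lift 0 (Suc 0) (lift 0 (Suc 0) w)" a2] merge_lift02 lift_lift0 by simp

lemma ROOT_dup_F:
  assumes cN: "c \<noteq> Need" and aa: "ren (mergef 0) a2 = a" and r: "rd c x (ES a w) t'"
  shows "\<exists>u'. rd c x (ES (ES a2 (lift 0 1 w)) w) u' \<and> streq c t' u'"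
  using r
proof cases
  case r_ls
  hence j: "hv c a2 = Some 0 \<or> hv c a2 = Some 1" using hv_merge[OF aa] by simp
  define u' where "u' = ES (ES (hrep c (lift 0 (Suc 0) (lift 0 (Suc 0) w)) a2) (lift 0 1 w)) w"
  have st: "streq c t' u'" using r_ls eq_dup[OF cN merge_hrep[OF aa]] by (simp add: u'_def)
  have "rd c x (ES (ES a2 (lift 0 1 w)) w) u'"
  proof (cases "hv c a2 = Some 0")
    case True
    thus ?thesis using r_ls r_ls'[of c a2 "lift 0 1 w"] by (auto simp: u'_def intro: rd.r_esl)
  next
    case False
    hence "hv c a2 = Some 1" using j by simp
    hence "hv c (ES a2 (lift 0 1 w)) = Some 0" by simp
    thus ?thesis using r_ls False r_ls'[of c "ES a2 (lift 0 1 w)" w] by (auto simp: u'_def)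
  qed
  thus ?thesis using st by blast
next
  case r_lsv
  hence j: "hv c a2 = Some 0 \<or> hv c a2 = Some 1" using hv_merge[OF aa] by simp
  show ?thesis
  proof (cases "hv c a2 = Some 0")
    case True
    have "rd c x (ES (ES a2 (lift 0 1 w)) w) (ES (lsvc c a2 (lift 0 1 w)) w)"
      using r_lsv True by (auto intro!: rd.r_esl rd.r_lsv)
    thus ?thesis using EQ_dupkept[OF cN True _ aa[symmetric]] r_lsv by auto
  next
    case False
    hence h1: "hv c a2 = Some 1" using j by simp
    hence "hv c (ES a2 (lift 0 1 w)) = Some 0" by simp
    hence "rd c x (ES (ES a2 (lift 0 1 w)) w) (lsvc c (ES a2 (lift 0 1 w)) w)"
      using r_lsv by (auto intro!: rd.r_lsv)
    thus ?thesis using EQ_duprenamed[OF cN h1 _ aa[symmetric]] r_lsv by auto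
  qed
next
  case (r_esl a')
  then obtain a2' where "a' = ren (mergef 0) a2'" "rd c x a2 a2'" using rd_ren_inv aa by blast
  hence "rd c x (ES (ES a2 (lift 0 1 w)) w) (ES (ES a2' (lift 0 1 w)) w)" by (auto intro: rd.r_esl)
  thus ?thesis using r_esl eq_dup[OF cN] \<open>a' = ren (mergef 0) a2'\<close> by auto
next
  case r_esr thus ?thesis using cN by simp
qed

lemma ROOT_dup_B:
  assumes cN: "c \<noteq> Need" and aa: "ren (mergef 0) a2 = a" and r: "rd c x (ES (ES a2 (lift 0 1 w)) w) t'"
  shows "\<exists>u'. rd c x (ES a w) u' \<and> streq c t' u'"
  using r
proof cases
  case r_ls
  hence h1: "hv c a2 = Some 1" by (auto simp: hv_lift01_ne0 split: option.splits nat.splits if_splits)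
  hence ha: "hv c a = Some 0" using hv_merge[OF aa] by simp
  have "t' = ES (ES (hrep c (lift 0 (Suc 0) (lift 0 (Suc 0) w)) a2) (lift 0 1 w)) w"
    using r_ls h1 by simp
  hence "streq c t' (ES (hrep c (lift 0 (Suc 0) w) a) w)"
    using eq_dup[OF cN merge_hrep[OF aa]] streq_sym by metis
  thus ?thesis using r_ls' ha r_ls by blast
next
  case r_lsv
  hence h1: "hv c a2 = Some 1" by (auto simp: hv_lift01_ne0 split: option.splits nat.splits if_splits)
  hence ha: "hv c a = Some 0" using hv_merge[OF aa] by simp
  have "rd c x (ES a w) (lsvc c a w)" using r_lsv ha by (auto intro: rd.r_lsv)
  thus ?thesis using EQ_duprenamed[OF cN h1 _ aa[symmetric]] r_lsv streq_sym by blast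
next
  case (r_esl t0)
  from r_esl(2) show ?thesis
  proof cases
    case r_ls
    hence ha: "hv c a = Some 0" using hv_merge[OF aa] by simp
    have "t' = ES (ES (hrep c (lift 0 (Suc 0) (lift 0 (Suc 0) w)) a2) (lift 0 1 w)) w"
      using r_ls r_esl by simp
    hence "streq c t' (ES (hrep c (lift 0 (Suc 0) w) a) w)"
      using eq_dup[OF cN merge_hrep[OF aa]] streq_sym by metis
    thus ?thesis using r_ls' ha r_ls by blast
  next
    case r_lsv
    hence ha: "hv c a = Some 0" and Lw: "Lval w" using hv_merge[OF aa] by auto
    have "rd c x (ES a w) (lsvc c a w)" using r_lsv ha Lw by (auto intro: rd.r_lsv)
    thus ?thesis using EQ_dupkept[OF cN _ Lw aa[symmetric]] r_lsv r_esl streq_sym by metis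
  next
    case (r_esl a2')
    hence "rd c x (ES a w) (ES (ren (mergef 0) a2') w)" using rd_ren aa by (metis rd.r_esl)
    moreover have "streq c (ES (ES a2' (lift 0 1 w)) w) (ES (ren (mergef 0) a2') w)"
      using eq_dup[OF cN refl] streq_sym by blast
    ultimately show ?thesis using r_esl \<open>t' = ES t0 w\<close> by auto
  next
    case r_esr thus ?thesis using cN by simp
  qed
next
  case r_esr thus ?thesis using cN by simp
qed


lemma goleft_ES2: "goleft c (ES a w) (ES b w') = goleft c a b"
  by (cases c) auto

lemma ROOT_app_F:
  assumes cN: "c \<noteq> Need" and r: "rd c x (ES (App a b) w) t'"
  shows "\<exists>u'. rd c x (App (ES a w) (ES b w)) u' \<and> streq c t' u'"
  using r
proof cases
  case r_ls
  hence ha: "hv c a = Some 0" by simp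
  have "rd c x (App (ES a w) (ES b w)) (App (ES (hrep c (lift 0 (Suc 0) w) a) w) (ES b w))"
    using r_ls ha by (auto intro!: rd.r_appl r_ls')
  moreover have "streq c t' (App (ES (hrep c (lift 0 (Suc 0) w) a) w) (ES b w))"
    using r_ls eq_app[OF cN] by simp
  ultimately show ?thesis by blast
next
  case r_lsv
  have st: "streq c t' (if goleft c a b then App (lsvc c a w) (ES b w) else App (ES a w) (lsvc c b w))"
    using EQ_applsv[OF cN, of w a b] r_lsv by simp
  show ?thesis
  proof (cases "goleft c a b")
    case True
    hence "rd c x (App (ES a w) (ES b w)) (App (lsvc c a w) (ES b w))"
      using r_lsv by (auto intro!: rd.r_appl rd.r_lsv simp: goleft_ES2)
    thus ?thesis using st True by auto
  next
    case False
    hence "rd c x (App (ES a w) (ES b w)) (App (ES a w) (lsvc c b w))"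
      using r_lsv by (auto intro!: rd.r_appr rd.r_lsv simp: goleft_ES2)
    thus ?thesis using st False by auto
  qed
next
  case (r_esl t0)
  from r_esl(2) show ?thesis
  proof cases
    case r_dB
    have "rd c M (App (ES a w) (ES b w)) (dbc (ES b w) (ES a w))" by (rule rd.r_dB) (use r_dB in auto)
    hence "rd c x (App (ES a w) (ES b w)) (dbc (ES b w) (ES a w))" using r_dB by simp
    thus ?thesis using EQ_dBcopy[OF cN, of a b w] r_esl r_dB by auto
  next
    case (r_appl a')
    hence "rd c x (App (ES a w) (ES b w)) (App (ES a' w) (ES b w))"
      by (auto intro!: rd.r_appl rd.r_esl simp: goleft_ES2)
    thus ?thesis using r_esl r_appl eq_app[OF cN] by auto
  next
    case (r_appr b')
    hence "rd c x (App (ES a w) (ES b w)) (App (ES a w) (ES b' w))"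
      by (auto intro!: rd.r_appr rd.r_esl simp: goleft_ES2)
    thus ?thesis using r_esl r_appr eq_app[OF cN] by auto
  qed
next
  case r_esr thus ?thesis using cN by simp
qed

lemma ROOT_app_B:
  assumes cN: "c \<noteq> Need" and r: "rd c x (App (ES a w) (ES b w)) t'"
  shows "\<exists>u'. rd c x (ES (App a b) w) u' \<and> streq c t' u'"
  using r
proof cases
  case r_dB
  hence "rd c x (ES (App a b) w) (ES (dbc b a) w)" by (auto intro!: rd.r_esl rd.r_dB)
  thus ?thesis using EQ_dBcopy[OF cN, of a b w] r_dB streq_sym by auto
next
  case (r_appl t0)
  have gl: "goleft c a b" using r_appl(3) by (simp add: goleft_ES2)
  from r_appl(2) show ?thesis
  proof cases
    case r_ls
    hence "hv c (App a b) = Some 0" using gl by simp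
    hence "rd c x (ES (App a b) w) (ES (App (hrep c (lift 0 (Suc 0) w) a) b) w)"
      using r_ls' r_ls gl by fastforce
    moreover have "streq c t' (ES (App (hrep c (lift 0 (Suc 0) w) a) b) w)"
      using r_ls r_appl eq_app[OF cN] streq_sym by simp
    ultimately show ?thesis by blast
  next
    case r_lsv
    hence "hv c (App a b) = Some 0" using gl by simp
    hence "rd c x (ES (App a b) w) (lsvc c (App a b) w)" using r_lsv by (auto intro!: rd.r_lsv)
    moreover have "streq c t' (lsvc c (App a b) w)"
      using EQ_applsv[OF cN, of w a b] gl r_lsv r_appl streq_sym by simp
    ultimately show ?thesis by blast
  next
    case (r_esl a')
    hence "rd c x (ES (App a b) w) (ES (App a' b) w)" using gl by (auto intro!: rd.r_appl rd.r_esl)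
    thus ?thesis using r_esl r_appl eq_app[OF cN] streq_sym by auto
  next
    case r_esr thus ?thesis using cN by simp
  qed
next
  case (r_appr t0)
  have gl: "\<not> goleft c a b" using r_appr(3) by (simp add: goleft_ES2)
  from r_appr(2) show ?thesis
  proof cases
    case r_ls thus ?thesis using gl by simp
  next
    case r_lsv
    hence "hv c (App a b) = Some 0" using gl by simp
    hence "rd c x (ES (App a b) w) (lsvc c (App a b) w)" using r_lsv by (auto intro!: rd.r_lsv)
    moreover have "streq c t' (lsvc c (App a b) w)"
      using EQ_applsv[OF cN, of w a b] gl r_lsv r_appr streq_sym by simp
    ultimately show ?thesis by blast
  next
    case (r_esl b')
    hence "rd c x (ES (App a b) w) (ES (App a b') w)" using gl by (auto intro!: rd.r_appr rd.r_esl)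
    thus ?thesis using r_esl r_appr eq_app[OF cN] streq_sym by auto
  next
    case r_esr thus ?thesis using cN by simp
  qed
qed


lemma hv_swap0: "hv c (swap 0 a) = Some 0 \<longleftrightarrow> hv c a = Some 1"
  by (auto simp: hv_swap swapf_def split: if_splits)
lemma hv_swap1: "hv c (swap 0 a) = Some 1 \<longleftrightarrow> hv c a = Some 0"
  by (auto simp: hv_swap swapf_def split: if_splits)

lemma hv_ES_lift01: "hv c (ES a (lift 0 1 u)) = Some 0 \<longleftrightarrow> hv c a = Some 1"
  by (auto simp: hv_lift liftf_def split: option.splits nat.splits if_splits)

lemma swap_hrep02: "swap 0 (hrep c (lift 0 (Suc (Suc 0)) w) a) = hrep c (lift 0 (Suc (Suc 0)) w) (swap 0 a)"
  using hrep_swap[of c 0 "lift 0 (Suc (Suc 0)) w" a] swap_lift02 by simp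

lemma ROOT_com:
  assumes r: "rd c x (ES (ES a (lift 0 1 u1)) w) t'"
  shows "\<exists>u'. rd c x (ES (ES (swap 0 a) (lift 0 1 w)) u1) u' \<and> streq c t' u'"
  using r
proof cases
  case r_ls
  hence h1: "hv c a = Some 1" using hv_ES_lift01 by blast
  have "rd c x (ES (ES (swap 0 a) (lift 0 1 w)) u1) (ES (ES (hrep c (lift 0 (Suc 0) (lift 0 (Suc 0) w)) (swap 0 a)) (lift 0 1 w)) u1)"
    using rd.r_esl[OF r_ls'[of c "swap 0 a" "lift 0 1 w"]] r_ls h1 hv_swap0 by auto
  moreover have "streq c t' (ES (ES (hrep c (lift 0 (Suc 0) (lift 0 (Suc 0) w)) (swap 0 a)) (lift 0 1 w)) u1)"
    using r_ls h1 eq_com[of c "hrep c (lift 0 (Suc (Suc 0)) w) a" u1 w] by (simp add: lift_lift0 swap_hrep02)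
  ultimately show ?thesis by blast
next
  case r_lsv
  hence h1: "hv c a = Some 1" using hv_ES_lift01 by blast
  have "rd c x (ES (ES (swap 0 a) (lift 0 1 w)) u1) (ES (lsvc c (swap 0 a) (lift 0 1 w)) u1)"
    using r_lsv h1 hv_swap0 by (auto intro!: rd.r_esl rd.r_lsv simp: lift_ren)
  thus ?thesis using EQ_com[OF h1, of w u1] r_lsv by auto
next
  case (r_esl t0)
  from r_esl(2) show ?thesis
  proof cases
    case r_ls
    have h1: "hv c (swap 0 a) = Some 1" using r_ls hv_swap1 by blast
    hence "hv c (ES (swap 0 a) (lift 0 1 w)) = Some 0" using hv_ES_lift01 by blast
    hence "rd c x (ES (ES (swap 0 a) (lift 0 1 w)) u1) (ES (ES (hrep c (lift 0 (Suc 0) (lift 0 (Suc 0) u1)) (swap 0 a)) (lift 0 1 w)) u1)"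
      using r_ls h1 r_ls'[of c "ES (swap 0 a) (lift 0 1 w)" u1] by (auto)
    moreover have "streq c t' (ES (ES (hrep c (lift 0 (Suc 0) (lift 0 (Suc 0) u1)) (swap 0 a)) (lift 0 1 w)) u1)"
      using r_ls r_esl eq_com[of c "hrep c (lift 0 (Suc (Suc 0)) u1) a" u1 w] by (simp add: lift_lift0 swap_hrep02)
    ultimately show ?thesis by blast
  next
    case r_lsv
    have h1: "hv c (swap 0 a) = Some 1" using r_lsv hv_swap1 by blast
    hence "hv c (ES (swap 0 a) (lift 0 1 w)) = Some 0" using hv_ES_lift01 by blast
    moreover have "Lval u1" using r_lsv by (simp add: lift_ren)
    ultimately have "rd c x (ES (ES (swap 0 a) (lift 0 1 w)) u1) (lsvc c (ES (swap 0 a) (lift 0 1 w)) u1)"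
      using r_lsv by (auto intro!: rd.r_lsv)
    moreover have "streq c t' (lsvc c (ES (swap 0 a) (lift 0 1 w)) u1)"
      using EQ_com[OF h1 \<open>Lval u1\<close>, of w] r_lsv r_esl streq_sym by simp
    ultimately show ?thesis by blast
  next
    case (r_esl a')
    hence "rd c x (ES (ES (swap 0 a) (lift 0 1 w)) u1) (ES (ES (swap 0 a') (lift 0 1 w)) u1)"
      by (auto intro!: rd.r_esl simp: swap_ren rd_ren)
    thus ?thesis using r_esl \<open>t' = ES t0 w\<close> eq_com by auto
  next
    case (r_esr u0)
    then obtain u1' where u1': "u0 = lift 0 1 u1'" "rd c x u1 u1'" using rd_lift_inv by blast
    have "hv c (ES (swap 0 a) (lift 0 1 w)) = Some 0" using r_esr hv_swap1 hv_ES_lift01 by blast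
    hence "rd c x (ES (ES (swap 0 a) (lift 0 1 w)) u1) (ES (ES (swap 0 a) (lift 0 1 w)) u1')"
      using r_esr u1' by (auto intro!: rd.r_esr)
    thus ?thesis using r_esr r_esl u1' eq_com by auto
  qed
next
  case (r_esr w')
  hence h1: "hv c a = Some 1" using hv_ES_lift01 by blast
  hence "rd c x (ES (ES (swap 0 a) (lift 0 1 w)) u1) (ES (ES (swap 0 a) (lift 0 1 w')) u1)"
    using r_esr hv_swap0 rd_lift01 by (auto intro!: rd.r_esl rd.r_esr)
  thus ?thesis using r_esr eq_com by auto
qed

lemma hv_l11_ne1: "hv c (lift 1 1 a) \<noteq> Some 1"
  by (auto simp: hv_lift liftf_def split: if_splits)
lemma hv_l11_0: "hv c (lift 1 1 a) = Some 0 \<longleftrightarrow> hv c a = Some 0"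
  by (auto simp: hv_lift liftf_def split: if_splits)

lemma ROOT_sub_F:
  assumes r: "rd c x (ES (ES (lift 1 1 a) u1) w) t'"
  shows "\<exists>u'. rd c x (ES a (ES u1 w)) u' \<and> streq c t' u'"
  using r
proof cases
  case r_ls thus ?thesis using hv_l11_ne1 by (auto split: option.splits nat.splits)
next
  case r_lsv
  hence cN: "c = Need" and h: "hv c a = Some 0" "hv c u1 = Some 0"
    using hv_l11_ne1[of c a] hv_l11_0[of c a] by (auto split: option.splits nat.splits if_splits)
  have "rd c x (ES a (ES u1 w)) (ES a (lsvc c u1 w))" using r_lsv cN h by (auto intro!: rd.r_esr rd.r_lsv)
  thus ?thesis using EQ_Needsub[of a w u1] r_lsv cN h by auto
next
  case (r_esl t0)
  from r_esl(2) show ?thesis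
  proof cases
    case r_ls
    hence h: "hv c a = Some 0" using hv_l11_0 by blast
    hence "rd c x (ES a (ES u1 w)) (ES (hrep c (lift 0 (Suc 0) (ES u1 w)) a) (ES u1 w))" using r_ls r_ls' by blast
    thus ?thesis using EQ_Namesub[of a u1 w] r_ls r_esl h by auto
  next
    case r_lsv
    hence h: "hv c a = Some 0" using hv_l11_0 by blast
    have "rd c E (ES a (ES u1 w)) (lsvc c a (ES u1 w))" by (rule rd.r_lsv) (use r_lsv h in auto)
    thus ?thesis using r_lsv r_esl by auto
  next
    case (r_esl a0)
    then obtain a' where "a0 = lift 1 1 a'" "rd c x a a'" using rd_lift_inv by blast
    thus ?thesis using r_esl \<open>t' = ES t0 w\<close> eq_sub by (auto intro: rd.r_esl)
  next
    case (r_esr u1')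
    hence "hv c a = Some 0" using hv_l11_0 by blast
    hence "rd c x (ES a (ES u1 w)) (ES a (ES u1' w))" using r_esr by (auto intro!: rd.r_esr rd.r_esl)
    thus ?thesis using r_esr r_esl eq_sub by auto
  qed
next
  case (r_esr w')
  hence h: "hv c a = Some 0" "hv c u1 = Some 0"
    using hv_l11_ne1[of c a] hv_l11_0[of c a] by (auto split: option.splits nat.splits if_splits)
  hence "rd c x (ES a (ES u1 w)) (ES a (ES u1 w'))" using r_esr by (auto intro!: rd.r_esr)
  thus ?thesis using r_esr eq_sub by auto
qed

lemma ROOT_sub_B:
  assumes r: "rd c x (ES a (ES u1 w)) t'"
  shows "\<exists>u'. rd c x (ES (ES (lift 1 1 a) u1) w) u' \<and> streq c t' u'"
  using r
proof cases
  case r_ls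
  have "rd c x (ES (ES (lift 1 1 a) u1) w) (ES (ES (hrep c (lift 0 (Suc 0) u1) (lift 1 1 a)) u1) w)"
    using rd.r_esl[OF r_ls'[of c "lift 1 1 a" u1]] r_ls hv_l11_0 by auto
  thus ?thesis using EQ_Namesub[of a u1 w] r_ls streq_sym by auto
next
  case r_lsv
  have "rd c x (ES (ES (lift 1 1 a) u1) w) (ES (lsvc c (lift 1 1 a) u1) w)"
    using r_lsv hv_l11_0 by (auto intro!: rd.r_esl rd.r_lsv)
  thus ?thesis using r_lsv by auto
next
  case (r_esl a')
  hence "rd c x (ES (ES (lift 1 1 a) u1) w) (ES (ES (lift 1 1 a') u1) w)"
    by (auto intro!: rd.r_esl simp: lift_ren rd_ren)
  thus ?thesis using r_esl eq_sub streq_sym by blast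
next
  case (r_esr t1)
  have cN: "c = Need" and h: "hv c a = Some 0" using r_esr by auto
  have h11: "hv c (lift (Suc 0) (Suc 0) a) = Some 0" using h hv_l11_0 by simp
  from r_esr(2) show ?thesis
  proof cases
    case r_ls thus ?thesis using cN by simp
  next
    case r_lsv
    have "hv c (ES (lift 1 1 a) u1) = Some 0" using r_lsv cN h11 by simp
    hence "rd c x (ES (ES (lift 1 1 a) u1) w) (lsvc c (ES (lift 1 1 a) u1) w)" using r_lsv by (auto intro!: rd.r_lsv)
    thus ?thesis using EQ_Needsub[of a w u1] r_lsv r_esr cN h streq_sym by auto
  next
    case (r_esl u1')
    hence "rd c x (ES (ES (lift 1 1 a) u1) w) (ES (ES (lift 1 1 a) u1') w)"
      using cN h11 by (auto intro!: rd.r_esl rd.r_esr)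
    thus ?thesis using r_esl r_esr eq_sub streq_sym by auto
  next
    case (r_esr w')
    have "hv c (ES (lift 1 1 a) u1) = Some 0" using r_esr cN h11 by simp
    hence "rd c x (ES (ES (lift 1 1 a) u1) w) (ES (ES (lift 1 1 a) u1) w')" using r_esr by (auto intro!: rd.r_esr)
    thus ?thesis using r_esr \<open>t' = ES a t1\<close> eq_sub streq_sym by auto
  qed
qed

lemma ROOT_appl_F:
  assumes cN: "c = Need" and r: "rd c x (ES (App a (lift 0 1 b)) w) t'"
  shows "\<exists>u'. rd c x (App (ES a w) b) u' \<and> streq c t' u'"
  using r
proof cases
  case r_ls thus ?thesis using cN by simp
next
  case r_lsv
  hence h: "hv c a = Some 0" using cN by simp
  have "rd c x (App (ES a w) b) (App (lsvc c a w) b)" using r_lsv h cN by (auto intro!: rd.r_appl rd.r_lsv)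
  thus ?thesis using EQ_appl[of a w b] r_lsv h cN by auto
next
  case (r_esl t0)
  from r_esl(2) show ?thesis
  proof cases
    case r_dB
    have "rd c M (App (ES a w) b) (dbc b (ES a w))" by (rule rd.r_dB) (use r_dB cN in auto)
    thus ?thesis using r_esl r_dB by auto
  next
    case (r_appl a')
    hence "rd c x (App (ES a w) b) (App (ES a' w) b)" using cN by (auto intro!: rd.r_appl rd.r_esl)
    thus ?thesis using r_esl r_appl eq_appl by auto
  next
    case r_appr thus ?thesis using cN by simp
  qed
next
  case (r_esr w')
  hence "hv c a = Some 0" using cN by simp
  hence "rd c x (App (ES a w) b) (App (ES a w') b)" using r_esr cN by (auto intro!: rd.r_appl rd.r_esr)
  thus ?thesis using r_esr eq_appl by auto
qed

lemma ROOT_appl_B: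
  assumes cN: "c = Need" and r: "rd c x (App (ES a w) b) t'"
  shows "\<exists>u'. rd c x (ES (App a (lift 0 1 b)) w) u' \<and> streq c t' u'"
  using r
proof cases
  case r_dB
  have "rd c M (App a (lift 0 1 b)) (dbc (lift 0 1 b) a)" by (rule rd.r_dB) (use r_dB cN in auto)
  hence "rd c x (ES (App a (lift 0 1 b)) w) (ES (dbc (lift 0 1 b) a) w)" using r_dB by (auto intro: rd.r_esl)
  thus ?thesis using r_dB by auto
next
  case (r_appl t0)
  from r_appl(2) show ?thesis
  proof cases
    case r_ls thus ?thesis using cN by simp
  next
    case r_lsv
    have "hv c (App a (lift 0 1 b)) = Some 0" using r_lsv cN by simp
    hence "rd c x (ES (App a (lift 0 1 b)) w) (lsvc c (App a (lift 0 1 b)) w)" using r_lsv by (auto intro!: rd.r_lsv)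
    thus ?thesis using EQ_appl[of a w b] r_lsv r_appl cN streq_sym by auto
  next
    case (r_esl a')
    hence "rd c x (ES (App a (lift 0 1 b)) w) (ES (App a' (lift 0 1 b)) w)" using cN by (auto intro!: rd.r_esl rd.r_appl)
    thus ?thesis using r_esl r_appl eq_appl streq_sym by blast
  next
    case (r_esr w')
    have "hv c (App a (lift 0 1 b)) = Some 0" using r_esr cN by simp
    hence "rd c x (ES (App a (lift 0 1 b)) w) (ES (App a (lift 0 1 b)) w')" using r_esr by (auto intro!: rd.r_esr)
    thus ?thesis using r_esr r_appl eq_appl streq_sym by auto
  qed
next
  case r_appr thus ?thesis using cN by simp
qed


lemma ROOT_com_B:
  assumes r: "rd c x (ES (ES (swap 0 a) (lift 0 1 w)) u1) t'"
  shows "\<exists>u'. rd c x (ES (ES a (lift 0 1 u1)) w) u' \<and> streq c t' u'"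
  using ROOT_com[OF r] by simp

lemma ROOT:
  assumes ax: "axioms c t u \<or> axioms c u t" and r: "rd c x t t'"
  shows "\<exists>u'. rd c x u u' \<and> streq c t' u'"
proof (cases "c = Need")
  case True
  from ax True have "need_ax t u \<or> need_ax u t" by simp
  thus ?thesis
  proof
    assume "need_ax t u"
    thus ?thesis
    proof cases
      case (ax_appl a b w) thus ?thesis using ROOT_appl_F[OF True] r by simp
    next
      case (ax_com a u1 w) thus ?thesis using ROOT_com r by simp
    next
      case (ax_sub a u1 w) thus ?thesis using ROOT_sub_F r by simp
    qed
  next
    assume "need_ax u t"
    thus ?thesis
    proof cases
      case (ax_appl a b w) thus ?thesis using ROOT_appl_B[OF True] r by simp
    next
      case (ax_com a u1 w) thus ?thesis using ROOT_com_B r by simp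
    next
      case (ax_sub a u1 w) thus ?thesis using ROOT_sub_B r by simp
    qed
  qed
next
  case False
  from ax False have "str_ax t u \<or> str_ax u t" by (cases c) auto
  thus ?thesis
  proof
    assume "str_ax t u"
    thus ?thesis
    proof cases
      case (ax_gc w) thus ?thesis using ROOT_gc_F[OF False] r by simp
    next
      case (ax_dup a a2 w) thus ?thesis using ROOT_dup_F[OF False] r by (simp add: ren_some_iff)
    next
      case (ax_app a b w) thus ?thesis using ROOT_app_F[OF False] r by simp
    next
      case (ax_com a u1 w) thus ?thesis using ROOT_com r by simp
    next
      case (ax_sub a u1 w) thus ?thesis using ROOT_sub_F r by simp
    qed
  next
    assume "str_ax u t"
    thus ?thesis
    proof cases
      case (ax_gc w) thus ?thesis using ROOT_gc_B[OF False] r by simp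
    next
      case (ax_dup a a2 w) thus ?thesis using ROOT_dup_B[OF False] r by (simp add: ren_some_iff)
    next
      case (ax_app a b w) thus ?thesis using ROOT_app_B[OF False] r by simp
    next
      case (ax_com a u1 w) thus ?thesis using ROOT_com_B r by simp
    next
      case (ax_sub a u1 w) thus ?thesis using ROOT_sub_B r by simp
    qed
  qed
qed

theorem mainTheorem2:
  fixes c :: calculus and x :: kind and t u t' :: trm
  assumes "streq c t u" and "red c x t t'"
  shows "\<exists>u'. red c x u u' \<and> streq c t' u'"
proof (rule main_from_sim[OF _ assms])
  fix t u t' assume h: "sx c t u" "rd c x t t'"
  have root: "\<And>t u t'. axioms c t u \<or> axioms c u t \<Longrightarrow> rd c x t t' \<Longrightarrow> \<exists>u'. rd c x u u' \<and> streq c t' u'"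
    by (rule ROOT)
  show "\<exists>u'. rd c x u u' \<and> streq c t' u'"
    by (rule sim_from_root[OF root h])
qed


end
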